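(* Let $f:\mathbb{R}^d\to\mathbb{R}$ be $C^3$, $1\le k\le d-1$, $\mathbf{x}^*$ a critical point of $f$, with $\delta>0$, $L>\mu>0$, $M>0$ such that for all $\mathbf{x}$ with $\|\mathbf{x}-\mathbf{x}^*\|_2\le\delta$ the eigenvalues of $\nabla^2 f(\mathbf{x})$ satisfy $-L<\lambda_1\le\dots\le\lambda_k<-\mu<0<\mu<\lambda_{k+1}\le\dots\le\lambda_d<L$ and $\nabla^2 f$ is $M$-Lipschitz there. Let $\theta>0$ with $C(\theta):=(1-\sqrt{\theta})\mu-L\theta-5L\sqrt{\theta}>0$, $U=\{\mathbf{x}:\|\mathbf{x}-\mathbf{x}^*\|_2\le\min(C(\theta)/M,\delta)\}$, and step sizes $0<\alpha(n)<\frac{1}{2\mu}$ with $\sum\alpha(n)=\infty$, $\sum\alpha(n)^2<\infty$. Assume $\mathbb{E}\,\nabla f(\mathbf{x};\omega)=\nabla f(\mathbf{x})$ and $\mathbb{E}\|\nabla f(\mathbf{x};\omega)-\nabla f(\mathbf{x})\|_2^2\le\sigma^2$ for all $\mathbf{x}$. Consider $\mathbf{x}(n+1)=\mathbf{x}(n)-\alpha(n)(I-2\sum_{i=1}^k\tilde{\mathbf{v}}_i^{(n)}\tilde{\mathbf{v}}_i^{(n)\top})\nabla f(\mathbf{x}(n);\omega(n))$, where whenever $\mathbf{x}(n)\in U$ the orthonormal vectors $\tilde{\mathbf{v}}_i^{(n)}$ satisfy $\|\sum_i\tilde{\mathbf{v}}_i^{(n)}\tilde{\mathbf{v}}_i^{(n)\top}-\sum_i\mathbf{v}_i\mathbf{v}_i^\top\|_2^2\le\theta$,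 with $\mathbf{v}_i$ orthonormal eigenvectors of $\nabla^2 f(\mathbf{x}(n))$ for its $k$ smallest eigenvalues. If the event $E^\infty=\{\mathbf{x}(n)\in U\ \forall n\}$ has positive probability, then conditioned on $E^\infty$, $\mathbf{x}(n)\to\mathbf{x}^*$ almost surely.
   Context: $\omega(n)$ is a fresh sample from a probability space, independent of the past iterates and of the vectors used at step $n$. *)

theory Defs
  imports "HOL-Probability.Probability"
begin

text \<open>Vectors of R^d are modelled as real^'n with d = CARD('n); families of
  vectors are indexed by natural numbers i < d (0-based).\<close>

definition outer :: "real^'n \<Rightarrow> real^'n^'n" where
  "outer u = (\<chi> i j. u $ i * u $ j)"

definition mat_opnorm :: "real^'n^'n \<Rightarrow> real" where
  "mat_opnorm A = onorm (\<lambda>v. A *v v)"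

definition orthonormal_fam :: "nat \<Rightarrow> (nat \<Rightarrow> real^'n) \<Rightarrow> bool" where
  "orthonormal_fam m u \<longleftrightarrow> (\<forall>i<m. \<forall>j<m. u i \<bullet> u j = (if i = j then 1 else 0))"

definition sym_eigenvalues :: "real^'n^'n \<Rightarrow> (nat \<Rightarrow> real) \<Rightarrow> bool" where
  "sym_eigenvalues A lam \<longleftrightarrow>
     (\<forall>i j. i \<le> j \<longrightarrow> j < CARD('n) \<longrightarrow> lam i \<le> lam j) \<and>
     (\<exists>u. orthonormal_fam CARD('n) u \<and> (\<forall>i<CARD('n). A *v u i = lam i *\<^sub>R u i))"

definition bottom_eigvecs :: "real^'n^'n \<Rightarrow> nat \<Rightarrow> (nat \<Rightarrow> real^'n) \<Rightarrow> bool" where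
  "bottom_eigvecs A k v \<longleftrightarrow>
     (\<exists>lam. sym_eigenvalues A lam \<and> orthonormal_fam k v \<and>
            (\<forall>i<k. A *v v i = lam i *\<^sub>R v i))"

end

theory Submission
  imports Defs
begin

lemma outer_mv: "outer u *v w = (u \<bullet> w) *\<^sub>R u"
  by (simp add: outer_def matrix_vector_mult_def vec_eq_iff inner_vec_def sum_distrib_left mult_ac)

lemma sum_outer_mv: "(\<Sum>i\<in>I. outer (u i)) *v w = (\<Sum>i\<in>I. (u i \<bullet> w) *\<^sub>R u i)"
proof (induction I rule: infinite_finite_induct)
  case (insert i I)
  then show ?case by (simp add: matrix_vector_mult_add_rdistrib outer_mv)
qed auto

lemma refl_mv: "(mat 1 - 2 *\<^sub>R (S::real^'n^'n)) *v w = w - 2 *\<^sub>R (S *v w)"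
proof -
  have "(2 *\<^sub>R S) *v w = 2 *\<^sub>R (S *v w)"
    unfolding vec_eq_iff matrix_vector_mult_def
    by (simp only: vector_scaleR_component vec_lambda_beta) (simp add: sum_distrib_left mult.assoc)
  then show ?thesis by (simp add: matrix_vector_mult_diff_rdistrib)
qed

lemma bl_mv: "bounded_linear (\<lambda>v. (A::real^'n^'m) *v v)"
  by (simp add: linear_conv_bounded_linear)

lemma mat_opnorm_bound: "norm (A *v w) \<le> mat_opnorm A * norm w"
  unfolding mat_opnorm_def by (rule onorm[OF bl_mv])

lemma mat_opnorm_nonneg: "0 \<le> mat_opnorm A"
  unfolding mat_opnorm_def by (rule onorm_pos_le[OF bl_mv])

definition Pj :: "nat \<Rightarrow> (nat \<Rightarrow> real^'n) \<Rightarrow> real^'n \<Rightarrow> real^'n" where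
  "Pj k V w = (\<Sum>i<k. (V i \<bullet> w) *\<^sub>R V i)"

definition Rf :: "nat \<Rightarrow> (nat \<Rightarrow> real^'n) \<Rightarrow> real^'n \<Rightarrow> real^'n" where
  "Rf k V w = w - 2 *\<^sub>R Pj k V w"

lemma inner_Pj: "e \<bullet> Pj k V w = (\<Sum>i<k. (V i \<bullet> w) * (V i \<bullet> e))"
  unfolding Pj_def inner_sum_right inner_scaleR_right by (simp add: inner_commute)

lemma Pj_sym: "e \<bullet> Pj k V w = Pj k V e \<bullet> w"
proof -
  have "Pj k V e \<bullet> w = w \<bullet> Pj k V e" by (rule inner_commute)
  then show ?thesis by (simp add: inner_Pj mult.commute)
qed

lemma Rf_sym: "e \<bullet> Rf k V w = Rf k V e \<bullet> w"
  by (simp add: Rf_def inner_diff_left inner_diff_right Pj_sym)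

lemma sum_onf: assumes "orthonormal_fam k V" "i < k"
  shows "(\<Sum>j<k. c j * (V j \<bullet> V i)) = c i"
proof -
  have "(\<Sum>j<k. c j * (V j \<bullet> V i)) = (\<Sum>j<k. if j = i then c j else 0)"
    by (rule sum.cong[OF refl]) (use assms in \<open>auto simp: orthonormal_fam_def\<close>)
  also have "\<dots> = c i" using assms(2) by (simp add: sum.delta)
  finally show ?thesis .
qed

lemma Pj_Pj: assumes "orthonormal_fam k V" shows "Pj k V w \<bullet> Pj k V w = w \<bullet> Pj k V w"
proof -
  have "Pj k V w \<bullet> Pj k V w = (\<Sum>i<k. (V i \<bullet> w) * (\<Sum>j<k. (V j \<bullet> w) * (V j \<bullet> V i)))"
    by (simp add: Pj_def inner_sum_left inner_sum_right mult_ac)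
  also have "\<dots> = (\<Sum>i<k. (V i \<bullet> w) * (V i \<bullet> w))"
    by (rule sum.cong[OF refl]) (simp add: sum_onf[OF assms])
  also have "\<dots> = w \<bullet> Pj k V w" by (simp add: inner_Pj)
  finally show ?thesis .
qed

lemma Rf_norm: assumes "orthonormal_fam k V" shows "norm (Rf k V w) = norm w"
proof -
  have e: "Pj k V w \<bullet> w = w \<bullet> Pj k V w" by (rule inner_commute)
  have "Rf k V w \<bullet> Rf k V w = w \<bullet> w - 4 * (w \<bullet> Pj k V w) + 4 * (Pj k V w \<bullet> Pj k V w)"
    unfolding Rf_def inner_diff_left inner_diff_right inner_scaleR_left inner_scaleR_right e
    by simp
  also have "\<dots> = w \<bullet> w" using Pj_Pj[OF assms, of w] by simp
  finally show ?thesis by (metis norm_eq_sqrt_inner)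
qed

lemma Rf_mat: "(mat 1 - 2 *\<^sub>R (\<Sum>i<k. outer (V i))) *v w = Rf k V w"
  by (simp add: refl_mv sum_outer_mv Rf_def Pj_def)

lemma Pj_mat: "(\<Sum>i<k. outer (V i)) *v w = Pj k V w"
  by (simp add: sum_outer_mv Pj_def)

lemma sum_onf': assumes "orthonormal_fam k V" "i < k"
  shows "(\<Sum>j<k. c j * (V i \<bullet> V j)) = c i"
proof -
  have "(\<Sum>j<k. c j * (V i \<bullet> V j)) = (\<Sum>j<k. if j = i then c j else 0)"
    by (rule sum.cong[OF refl]) (use assms in \<open>auto simp: orthonormal_fam_def\<close>)
  also have "\<dots> = c i" using assms(2) by (simp add: sum.delta)
  finally show ?thesis .
qed

lemma onf_inj: assumes "orthonormal_fam m u" shows "inj_on u {..<m}"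
proof (rule inj_onI)
  fix i j assume "i \<in> {..<m}" "j \<in> {..<m}" "u i = u j"
  then show "i = j" using assms unfolding orthonormal_fam_def
    by (metis lessThan_iff zero_neq_one)
qed

lemma onf_norm: assumes "orthonormal_fam m u" "i < m" shows "u i \<noteq> 0"
  using assms unfolding orthonormal_fam_def by (metis inner_zero_left zero_neq_one)

lemma onf_indep: assumes "orthonormal_fam m u" "S \<subseteq> {..<m}"
  shows "independent (u ` S)"
proof (rule pairwise_orthogonal_independent)
  show "pairwise orthogonal (u ` S)"
    unfolding pairwise_def orthogonal_def using assms unfolding orthonormal_fam_def
    by (auto, metis lessThan_iff subsetD)
  show "0 \<notin> u ` S" using assms onf_norm by fastforce
qed

lemma onf_card: assumes "orthonormal_fam m u" "S \<subseteq> {..<m}"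
  shows "card (u ` S) = card S"
  using assms onf_inj card_image inj_on_subset by metis

lemma span_full: fixes B :: "(real^'n) set"
  assumes "independent B" "finite B" "card B = CARD('n)" shows "span B = UNIV"
proof -
  have "UNIV \<subseteq> span B" using card_eq_dim[of B UNIV] assms by simp
  then show ?thesis by auto
qed

lemma onf_expand: fixes u :: "nat \<Rightarrow> real^'n"
  assumes onf: "orthonormal_fam CARD('n) u"
  shows "w = (\<Sum>j<CARD('n). (u j \<bullet> w) *\<^sub>R u j)"
proof -
  let ?d = "CARD('n)"
  have sp: "span (u ` {..<?d}) = UNIV"
    by (rule span_full) (use onf_indep[OF onf] onf_card[OF onf] in auto)
  define r where "r = w - (\<Sum>j<?d. (u j \<bullet> w) *\<^sub>R u j)"
  have o: "u l \<bullet> r = 0" if "l < ?d" for l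
  proof -
    have "u l \<bullet> r = u l \<bullet> w - (\<Sum>j<?d. (u j \<bullet> w) * (u l \<bullet> u j))"
      by (simp add: r_def inner_diff_right inner_sum_right)
    also have "\<dots> = 0" using sum_onf'[OF onf that, of "\<lambda>j. u j \<bullet> w"] by simp
    finally show ?thesis .
  qed
  have "orthogonal r r"
    by (rule orthogonal_to_span[of r "u ` {..<?d}"]) (use sp o in \<open>auto simp: orthogonal_def inner_commute\<close>)
  then have "r = 0" by (simp add: orthogonal_def)
  then show ?thesis by (simp add: r_def)
qed

lemma mv_sum: "(M::real^'n^'m) *v (\<Sum>j\<in>S. c j *\<^sub>R x j) = (\<Sum>j\<in>S. c j *\<^sub>R (M *v x j))"
  by (induction S rule: infinite_finite_induct)
     (auto simp: matrix_vector_right_distrib matrix_vector_mult_scaleR)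

lemma onf_parseval: fixes u :: "nat \<Rightarrow> real^'n"
  assumes onf: "orthonormal_fam CARD('n) u"
  shows "z \<bullet> z = (\<Sum>j<CARD('n). (u j \<bullet> z)\<^sup>2)"
proof -
  have "z \<bullet> z = (\<Sum>j<CARD('n). (u j \<bullet> z) *\<^sub>R u j) \<bullet> z" using onf_expand[OF onf, of z] by simp
  also have "\<dots> = (\<Sum>j<CARD('n). (u j \<bullet> z)\<^sup>2)"
    by (simp add: inner_sum_left power2_eq_square)
  finally show ?thesis .
qed

lemma eig_coef: fixes u :: "nat \<Rightarrow> real^'n"
  assumes onf: "orthonormal_fam CARD('n) u"
    and ev: "\<And>j. j < CARD('n) \<Longrightarrow> A *v u j = lam j *\<^sub>R u j"
    and l: "l < CARD('n)"
  shows "u l \<bullet> (A *v z) = lam l * (u l \<bullet> z)"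
proof -
  have "A *v z = A *v (\<Sum>j<CARD('n). (u j \<bullet> z) *\<^sub>R u j)" using onf_expand[OF onf, of z] by simp
  also have "\<dots> = (\<Sum>j<CARD('n). (u j \<bullet> z) *\<^sub>R (lam j *\<^sub>R u j))" by (simp add: mv_sum ev)
  finally have "u l \<bullet> (A *v z) = (\<Sum>j<CARD('n). ((u j \<bullet> z) * lam j) * (u l \<bullet> u j))"
    by (simp add: inner_sum_right mult_ac)
  also have "\<dots> = (u l \<bullet> z) * lam l" by (rule sum_onf'[OF onf l])
  finally show ?thesis by simp
qed

lemma in_span_sub: fixes u :: "nat \<Rightarrow> real^'n"
  assumes onf: "orthonormal_fam CARD('n) u" and S: "S \<subseteq> {..<CARD('n)}"
    and z: "\<And>l. l < CARD('n) \<Longrightarrow> l \<notin> S \<Longrightarrow> u l \<bullet> z = 0"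
  shows "z \<in> span (u ` S)"
proof -
  have "z = (\<Sum>j<CARD('n). (u j \<bullet> z) *\<^sub>R u j)" by (rule onf_expand[OF onf])
  also have "\<dots> = (\<Sum>j\<in>S. (u j \<bullet> z) *\<^sub>R u j)"
    by (rule sum.mono_neutral_right) (use S z in auto)
  also have "\<dots> \<in> span (u ` S)"
    by (intro span_sum span_mul span_base) auto
  finally show ?thesis .
qed

lemma Pj_mv_sum: "Pj k v (\<Sum>j\<in>S. c j *\<^sub>R x j) = (\<Sum>j\<in>S. c j *\<^sub>R Pj k v (x j))"
  using mv_sum[of "\<Sum>i<k. outer (v i)" c x S] by (simp add: Pj_mat)

lemma spec_norm:
  fixes A :: "real^'n^'n" and u :: "nat \<Rightarrow> real^'n"
  assumes onf: "orthonormal_fam CARD('n) u"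
    and ev: "\<And>j. j < CARD('n) \<Longrightarrow> A *v u j = lam j *\<^sub>R u j"
    and bd: "\<And>j. j < CARD('n) \<Longrightarrow> \<bar>lam j\<bar> \<le> L"
  shows "norm (A *v w) \<le> L * norm w"
proof -
  have L: "0 \<le> L" using bd[of 0] by force
  have "(norm (A *v w))\<^sup>2 = (\<Sum>j<CARD('n). (u j \<bullet> (A *v w))\<^sup>2)"
    by (simp only: power2_norm_eq_inner onf_parseval[OF onf, of "A *v w"])
  also have "\<dots> = (\<Sum>j<CARD('n). (lam j)\<^sup>2 * (u j \<bullet> w)\<^sup>2)"
    by (rule sum.cong[OF refl]) (simp add: eig_coef[OF onf ev] power_mult_distrib)
  also have "\<dots> \<le> (\<Sum>j<CARD('n). L\<^sup>2 * (u j \<bullet> w)\<^sup>2)"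
  proof (rule sum_mono)
    fix j assume "j \<in> {..<CARD('n)}"
    then have "(lam j)\<^sup>2 \<le> L\<^sup>2" using bd[of j] L abs_le_square_iff[of "lam j" L] by simp
    then show "(lam j)\<^sup>2 * (u j \<bullet> w)\<^sup>2 \<le> L\<^sup>2 * (u j \<bullet> w)\<^sup>2" by (simp add: mult_right_mono)
  qed
  also have "\<dots> = L\<^sup>2 * (w \<bullet> w)"
    by (simp only: onf_parseval[OF onf, of w] sum_distrib_left)
  also have "\<dots> = (L * norm w)\<^sup>2"
    by (simp only: power_mult_distrib power2_norm_eq_inner)
  finally have "(norm (A *v w))\<^sup>2 \<le> (L * norm w)\<^sup>2" .
  then show ?thesis by (rule power2_le_imp_le) (use L in simp)
qed

lemma spec_quad:
  fixes A :: "real^'n^'n" and u v :: "nat \<Rightarrow> real^'n"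
  assumes onf: "orthonormal_fam CARD('n) u"
    and ev: "\<And>j. j < CARD('n) \<Longrightarrow> A *v u j = lam j *\<^sub>R u j"
    and neg: "\<And>j. j < k \<Longrightarrow> lam j < - \<mu>"
    and pos: "\<And>j. k \<le> j \<Longrightarrow> j < CARD('n) \<Longrightarrow> \<mu> < lam j"
    and k1: "1 \<le> k" and kle: "k \<le> CARD('n)" and mu: "0 < \<mu>"
    and bot: "bottom_eigvecs A k v"
  shows "\<mu> * (norm w)\<^sup>2 \<le> w \<bullet> (A *v w) - 2 * (Pj k v w \<bullet> (A *v w))"
proof -
  let ?d = "CARD('n)"
  have zero: "(lam l - t) * (u l \<bullet> z) = 0" if "A *v z = t *\<^sub>R z" "l < ?d" for z t l
    using eig_coef[OF onf ev \<open>l < ?d\<close>, of z] that by (auto simp: algebra_simps)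
  obtain lam' u' where sorted: "\<And>i j. i \<le> j \<Longrightarrow> j < ?d \<Longrightarrow> lam' i \<le> lam' j"
    and onf': "orthonormal_fam ?d u'" and ev': "\<And>i. i < ?d \<Longrightarrow> A *v u' i = lam' i *\<^sub>R u' i"
    and onv: "orthonormal_fam k v" and evv: "\<And>i. i < k \<Longrightarrow> A *v v i = lam' i *\<^sub>R v i"
    using bot unfolding bottom_eigvecs_def sym_eigenvalues_def by blast
  have km1: "lam' (k - 1) < 0"
  proof (rule ccontr)
    assume "\<not> lam' (k - 1) < 0"
    then have ge: "0 \<le> lam' (k - 1)" by simp
    have kd: "k - 1 < ?d" using k1 kle by simp
    have "u' (k - 1) \<noteq> 0" by (rule onf_norm[OF onf' kd])
    have "\<exists>l<?d. u l \<bullet> u' (k - 1) \<noteq> 0"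
    proof (rule ccontr)
      assume "\<not> (\<exists>l<?d. u l \<bullet> u' (k - 1) \<noteq> 0)"
      then have "(\<Sum>j<?d. (u j \<bullet> u' (k - 1)) *\<^sub>R u j) = 0" by (intro sum.neutral) auto
      then show False using onf_expand[OF onf, of "u' (k - 1)"] \<open>u' (k - 1) \<noteq> 0\<close> by simp
    qed
    then obtain l where l: "l < ?d" "u l \<bullet> u' (k - 1) \<noteq> 0" by blast
    have "lam l = lam' (k - 1)" using zero[OF ev'[OF kd] l(1)] l(2) by simp
    with ge neg[of l] mu have "\<not> l < k" by force
    with pos[of l] l have gt: "\<mu> < lam' (k - 1)" using \<open>lam l = lam' (k - 1)\<close> by simp
    have sub: "u' ` {k - 1..<?d} \<subseteq> span (u ` {k..<?d})"
    proof
      fix z assume "z \<in> u' ` {k - 1..<?d}"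
      then obtain j where j: "k - 1 \<le> j" "j < ?d" "z = u' j" by auto
      have lj: "\<mu> < lam' j" using sorted[OF j(1,2)] gt by simp
      show "z \<in> span (u ` {k..<?d})"
      proof (rule in_span_sub[OF onf])
        fix l assume "l < ?d" "l \<notin> {k..<?d}"
        then have "l < k" by simp
        then have "lam l - lam' j \<noteq> 0" using neg[of l] lj mu by simp
        then show "u l \<bullet> z = 0" using zero[OF ev'[OF \<open>j < ?d\<close>] \<open>l < ?d\<close>] j(3) by simp
      qed auto
    qed
    have ss: "{k - 1..<?d} \<subseteq> {..<?d}" by auto
    have ss2: "{k..<?d} \<subseteq> {..<?d}" by auto
    have c1: "card (u' ` {k - 1..<?d}) \<le> card (u ` {k..<?d})"
      using independent_span_bound[OF _ onf_indep[OF onf' ss] sub] by blast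
    have c2: "card (u ` {k..<?d}) = ?d - k" using onf_card[OF onf ss2] by simp
    have c3: "card (u' ` {k - 1..<?d}) = ?d - (k - 1)" using onf_card[OF onf' ss] by simp
    show False using c1 c2 c3 k1 kle by linarith
  qed
  have vneg: "lam' i < 0" if "i < k" for i
  proof -
    have "i \<le> k - 1" "k - 1 < ?d" using that k1 kle by auto
    then show ?thesis using sorted[of i "k - 1"] km1 by linarith
  qed
  have uv0: "u l \<bullet> v i = 0" if "i < k" "k \<le> l" "l < ?d" for i l
  proof -
    have "lam l - lam' i \<noteq> 0" using pos[OF that(2,3)] vneg[OF that(1)] mu by simp
    then show ?thesis using zero[OF evv[OF that(1)] that(3)] by simp
  qed
  have Pj_hi: "Pj k v (u l) = 0" if "k \<le> l" "l < ?d" for l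
    unfolding Pj_def using uv0 that by (simp add: inner_commute)
  have Pj_lo: "Pj k v (u j) = u j" if j: "j < k" for j
  proof (rule ccontr)
    define r where "r = u j - Pj k v (u j)"
    assume "Pj k v (u j) \<noteq> u j"
    then have r0: "r \<noteq> 0" by (simp add: r_def)
    have jd: "j < ?d" using j kle by simp
    have vr: "v i \<bullet> r = 0" if "i < k" for i
    proof -
      have "v i \<bullet> Pj k v (u j) = (\<Sum>m<k. (v m \<bullet> u j) * (v i \<bullet> v m))"
        by (simp add: Pj_def inner_sum_right)
      also have "\<dots> = v i \<bullet> u j" by (rule sum_onf'[OF onv that])
      finally show ?thesis by (simp add: r_def inner_diff_right)
    qed
    have ur: "u l \<bullet> r = 0" if "k \<le> l" "l < ?d" for l
    proof -
      have "u l \<bullet> u j = 0" using onf that j unfolding orthonormal_fam_def by auto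
      moreover have "u l \<bullet> Pj k v (u j) = 0"
        unfolding Pj_def inner_sum_right using uv0 that by simp
      ultimately show ?thesis by (simp add: r_def inner_diff_right)
    qed
    let ?T = "insert r (v ` {..<k})"
    have rnot: "r \<notin> v ` {..<k}"
    proof
      assume "r \<in> v ` {..<k}"
      then obtain i where "i < k" "r = v i" by auto
      then show False using vr[of i] onv unfolding orthonormal_fam_def by auto
    qed
    have indT: "independent ?T"
    proof (rule pairwise_orthogonal_independent)
      show "pairwise orthogonal ?T"
      proof (unfold pairwise_def orthogonal_def, intro ballI impI)
        fix a b assume a: "a \<in> ?T" and b: "b \<in> ?T" and ab: "a \<noteq> b"
        show "a \<bullet> b = 0"
        proof (cases "a = r")
          case True
          then obtain i where "i < k" "b = v i" using b ab by auto
          then show ?thesis using vr[of i] True by (simp add: inner_commute)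
        next
          case False
          then obtain i where i: "i < k" "a = v i" using a by auto
          show ?thesis
          proof (cases "b = r")
            case True then show ?thesis using vr[OF i(1)] i by simp
          next
            case False
            then obtain j where "j < k" "b = v j" using b by auto
            then show ?thesis using onv i ab unfolding orthonormal_fam_def by auto
          qed
        qed
      qed
      show "0 \<notin> ?T" using r0 onf_norm[OF onv] by auto
    qed
    have subT: "?T \<subseteq> span (u ` {..<k})"
    proof -
      have "r \<in> span (u ` {..<k})"
        by (rule in_span_sub[OF onf]) (use kle ur in auto)
      moreover have "v i \<in> span (u ` {..<k})" if "i < k" for i
        by (rule in_span_sub[OF onf]) (use kle uv0[OF that] in auto)
      ultimately show ?thesis by auto
    qed
    have "card ?T \<le> card (u ` {..<k})"
      using independent_span_bound[OF _ indT subT] by auto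
    also have "\<dots> = k" using onf_card[OF onf, of "{..<k}"] kle by simp
    finally show False using rnot onf_card[OF onv, of "{..<k}"] by simp
  qed
  define c where "c j = u j \<bullet> w" for j
  have wexp: "w = (\<Sum>j<?d. c j *\<^sub>R u j)" unfolding c_def by (rule onf_expand[OF onf])
  have "Pj k v w = (\<Sum>j<?d. c j *\<^sub>R Pj k v (u j))" by (subst wexp) (rule Pj_mv_sum)
  also have "\<dots> = (\<Sum>j<?d. if j < k then c j *\<^sub>R u j else 0)"
    by (rule sum.cong[OF refl]) (auto simp: Pj_lo Pj_hi)
  also have "\<dots> = (\<Sum>j<k. c j *\<^sub>R u j)"
    by (rule sum.mono_neutral_cong_right) (use kle in auto)
  finally have Pw: "Pj k v w = (\<Sum>j<k. c j *\<^sub>R u j)" .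
  have cA: "u j \<bullet> (A *v w) = lam j * c j" if "j < ?d" for j
    unfolding c_def by (rule eig_coef[OF onf ev that])
  have t1: "Pj k v w \<bullet> (A *v w) = (\<Sum>j<k. lam j * (c j)\<^sup>2)"
    unfolding Pw inner_sum_left using cA kle by (intro sum.cong) (auto simp: power2_eq_square)
  have t2: "w \<bullet> (A *v w) = (\<Sum>j<?d. lam j * (c j)\<^sup>2)"
    by (subst (1) wexp) (auto simp: inner_sum_left cA power2_eq_square intro!: sum.cong)
  have split: "(\<Sum>j<?d. f j) = (\<Sum>j<k. f j) + (\<Sum>j\<in>{k..<?d}. f j)" for f :: "nat \<Rightarrow> real"
  proof -
    have "{..<?d} = {..<k} \<union> {k..<?d}" using kle by auto
    moreover have "sum f ({..<k} \<union> {k..<?d}) = sum f {..<k} + sum f {k..<?d}"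
      by (rule sum.union_disjoint) auto
    ultimately show ?thesis by simp
  qed
  have "w \<bullet> (A *v w) - 2 * (Pj k v w \<bullet> (A *v w))
      = (\<Sum>j\<in>{k..<?d}. lam j * (c j)\<^sup>2) + (\<Sum>j<k. (- lam j) * (c j)\<^sup>2)"
    unfolding t1 t2 split by (simp add: sum_negf)
  also have "\<dots> \<ge> (\<Sum>j\<in>{k..<?d}. \<mu> * (c j)\<^sup>2) + (\<Sum>j<k. \<mu> * (c j)\<^sup>2)"
    by (intro add_mono sum_mono mult_right_mono) (use pos neg in \<open>force+\<close>)
  also have "(\<Sum>j\<in>{k..<?d}. \<mu> * (c j)\<^sup>2) + (\<Sum>j<k. \<mu> * (c j)\<^sup>2) = \<mu> * (norm w)\<^sup>2"
    using split[of "\<lambda>j. \<mu> * (c j)\<^sup>2"] onf_parseval[OF onf, of w]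
    by (simp add: sum_distrib_left[symmetric] power2_norm_eq_inner c_def)
  finally show ?thesis by simp
qed

lemma taylor_bound:
  fixes g :: "real^'n \<Rightarrow> real^'n" and H :: "real^'n \<Rightarrow> real^'n^'n"
  assumes hess: "\<And>y. (g has_derivative (\<lambda>h. H y *v h)) (at y)"
    and lip: "\<And>y z. norm (y - xs) \<le> \<delta> \<Longrightarrow> norm (z - xs) \<le> \<delta> \<Longrightarrow>
               mat_opnorm (H y - H z) \<le> Mlip * norm (y - z)"
    and y: "norm (y - xs) \<le> \<delta>" and M: "0 \<le> Mlip"
  shows "norm (g y - g xs - H y *v (y - xs)) \<le> norm (y - xs) * (Mlip * norm (y - xs))"
proof -
  define S where "S = {z. norm (z - xs) \<le> norm (y - xs) \<and> norm (z - y) \<le> norm (y - xs)}"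
  show ?thesis
  proof (rule differentiable_bound_linearization[where S = S and f' = "\<lambda>z h. H z *v h"])
    fix t :: real assume t: "t \<in> {0..1}"
    have "norm (xs + t *\<^sub>R (y - xs) - xs) = t * norm (y - xs)" using t by simp
    also have "\<dots> \<le> norm (y - xs)" using t by (simp add: mult_left_le_one_le)
    finally have 1: "norm (xs + t *\<^sub>R (y - xs) - xs) \<le> norm (y - xs)" .
    have "xs + t *\<^sub>R (y - xs) - y = (1 - t) *\<^sub>R (xs - y)" by (simp add: algebra_simps)
    then have "norm (xs + t *\<^sub>R (y - xs) - y) = (1 - t) * norm (y - xs)"
      using t by (simp add: norm_minus_commute)
    also have "\<dots> \<le> norm (y - xs)" using t by (simp add: mult_left_le_one_le)
    finally show "xs + t *\<^sub>R (y - xs) \<in> S" using 1 by (simp add: S_def)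
  next
    fix z assume "z \<in> S"
    show "(g has_derivative (\<lambda>h. H z *v h)) (at z within S)"
      by (rule has_derivative_at_withinI[OF hess])
  next
    fix z assume z: "z \<in> S"
    have zd: "norm (z - xs) \<le> \<delta>" using z y by (simp add: S_def)
    have "(\<lambda>h. H z *v h) - (\<lambda>h. H y *v h) = (\<lambda>h. (H z - H y) *v h)"
      by (simp add: fun_diff_def matrix_vector_mult_diff_rdistrib)
    then have "onorm ((\<lambda>h. H z *v h) - (\<lambda>h. H y *v h)) = mat_opnorm (H z - H y)"
      by (simp add: mat_opnorm_def)
    also have "\<dots> \<le> Mlip * norm (z - y)" by (rule lip[OF zd y])
    also have "\<dots> \<le> Mlip * norm (y - xs)" using z M by (simp add: S_def mult_left_mono)
    finally show "onorm ((\<lambda>h. H z *v h) - (\<lambda>h. H y *v h)) \<le> Mlip * norm (y - xs)" .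
  next
    show "y \<in> S" by (simp add: S_def)
  qed
qed

lemma geo:
  fixes g :: "real^'n \<Rightarrow> real^'n" and H :: "real^'n \<Rightarrow> real^'n^'n"
  assumes hess: "\<And>y. (g has_derivative (\<lambda>h. H y *v h)) (at y)"
    and crit: "g xs = 0"
    and eig: "\<And>y. norm (y - xs) \<le> \<delta> \<Longrightarrow>
               \<exists>lam. sym_eigenvalues (H y) lam \<and>
                 (\<forall>i<k. - L < lam i \<and> lam i < - \<mu>) \<and>
                 (\<forall>i. k \<le> i \<longrightarrow> i < CARD('n) \<longrightarrow> \<mu> < lam i \<and> lam i < L)"
    and lip: "\<And>y z. norm (y - xs) \<le> \<delta> \<Longrightarrow> norm (z - xs) \<le> \<delta> \<Longrightarrow>
               mat_opnorm (H y - H z) \<le> Mlip * norm (y - z)"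
    and k1: "1 \<le> k" and kle: "k \<le> CARD('n)" and mu: "0 < \<mu>" and L: "\<mu> < L" and M: "0 \<le> Mlip"
    and y: "norm (y - xs) \<le> \<delta>" and yC: "Mlip * norm (y - xs) \<le> Cc"
    and Vo: "orthonormal_fam k V"
    and bot: "bottom_eigvecs (H y) k v"
    and appr: "(mat_opnorm ((\<Sum>i<k. outer (V i)) - (\<Sum>i<k. outer (v i))))\<^sup>2 \<le> \<theta>"
  shows "(\<mu> - 2 * sqrt \<theta> * L - Cc) * (norm (y - xs))\<^sup>2 \<le> Rf k V (y - xs) \<bullet> g y"
    and "norm (g y) \<le> L * norm (y - xs) + Mlip * (norm (y - xs))\<^sup>2"
proof -
  define e where "e = y - xs"
  define A where "A = H y"
  obtain lam where sl: "sym_eigenvalues A lam"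
    and neg: "\<And>i. i < k \<Longrightarrow> - L < lam i \<and> lam i < - \<mu>"
    and pos: "\<And>i. k \<le> i \<Longrightarrow> i < CARD('n) \<Longrightarrow> \<mu> < lam i \<and> lam i < L"
    using eig[OF y] unfolding A_def by blast
  obtain u where onf: "orthonormal_fam CARD('n) u" and ev: "\<And>i. i < CARD('n) \<Longrightarrow> A *v u i = lam i *\<^sub>R u i"
    using sl unfolding sym_eigenvalues_def by blast
  have bd: "\<bar>lam j\<bar> \<le> L" if "j < CARD('n)" for j
    using neg[of j] pos[of j] that mu L by (cases "j < k") auto
  have nA: "norm (A *v w) \<le> L * norm w" for w by (rule spec_norm[OF onf ev bd])
  have qA: "\<mu> * (norm w)\<^sup>2 \<le> w \<bullet> (A *v w) - 2 * (Pj k v w \<bullet> (A *v w))" for w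
    by (rule spec_quad[OF onf ev _ _ k1 kle mu]) (use neg pos bot in \<open>auto simp: A_def\<close>)
  define \<rho> where "\<rho> = g y - A *v e"
  have n\<rho>: "norm \<rho> \<le> norm e * (Mlip * norm e)"
    using taylor_bound[OF hess lip y M] crit by (simp add: \<rho>_def e_def A_def)
  have th0: "0 \<le> \<theta>" using appr by (metis zero_le_power2 order_trans)
  have th: "mat_opnorm ((\<Sum>i<k. outer (V i)) - (\<Sum>i<k. outer (v i))) \<le> sqrt \<theta>"
    by (rule real_le_rsqrt[OF appr])
  have dP: "norm (Pj k V e - Pj k v e) \<le> sqrt \<theta> * norm e"
  proof -
    have "Pj k V e - Pj k v e = ((\<Sum>i<k. outer (V i)) - (\<Sum>i<k. outer (v i))) *v e"
      by (simp add: matrix_vector_mult_diff_rdistrib Pj_mat)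
    then have "norm (Pj k V e - Pj k v e) \<le> mat_opnorm ((\<Sum>i<k. outer (V i)) - (\<Sum>i<k. outer (v i))) * norm e"
      using mat_opnorm_bound by metis
    also have "\<dots> \<le> sqrt \<theta> * norm e" by (rule mult_right_mono[OF th norm_ge_zero])
    finally show ?thesis .
  qed
  have c1: "\<bar>(Pj k V e - Pj k v e) \<bullet> (A *v e)\<bar> \<le> sqrt \<theta> * norm e * (L * norm e)"
  proof -
    have "\<bar>(Pj k V e - Pj k v e) \<bullet> (A *v e)\<bar> \<le> norm (Pj k V e - Pj k v e) * norm (A *v e)"
      by (rule Cauchy_Schwarz_ineq2)
    also have "\<dots> \<le> sqrt \<theta> * norm e * (L * norm e)"
      by (rule mult_mono[OF dP nA]) (use th0 in auto)
    finally show ?thesis .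
  qed
  have c2: "\<bar>Rf k V e \<bullet> \<rho>\<bar> \<le> norm e * (norm e * (Mlip * norm e))"
  proof -
    have "\<bar>Rf k V e \<bullet> \<rho>\<bar> \<le> norm (Rf k V e) * norm \<rho>" by (rule Cauchy_Schwarz_ineq2)
    also have "\<dots> = norm e * norm \<rho>" by (simp add: Rf_norm[OF Vo])
    also have "\<dots> \<le> norm e * (norm e * (Mlip * norm e))" by (rule mult_left_mono[OF n\<rho>]) auto
    finally show ?thesis .
  qed
  have dec: "Rf k V e \<bullet> g y = (e \<bullet> (A *v e) - 2 * (Pj k v e \<bullet> (A *v e)))
      - 2 * ((Pj k V e - Pj k v e) \<bullet> (A *v e)) + Rf k V e \<bullet> \<rho>"
    by (simp add: \<rho>_def Rf_def inner_diff_left inner_diff_right inner_add_right algebra_simps)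
  have me: "Mlip * norm e * (norm e)\<^sup>2 \<le> Cc * (norm e)\<^sup>2"
    using yC by (intro mult_right_mono) (auto simp: e_def)
  have "(\<mu> - 2 * sqrt \<theta> * L - Cc) * (norm e)\<^sup>2
      \<le> \<mu> * (norm e)\<^sup>2 - 2 * (sqrt \<theta> * norm e * (L * norm e)) - norm e * (norm e * (Mlip * norm e))"
    using me by (simp add: algebra_simps power2_eq_square)
  also have "\<dots> \<le> Rf k V e \<bullet> g y"
    unfolding dec using qA[of e] c1 c2 by linarith
  finally show "(\<mu> - 2 * sqrt \<theta> * L - Cc) * (norm (y - xs))\<^sup>2 \<le> Rf k V (y - xs) \<bullet> g y"
    by (simp add: e_def)
  have "norm (g y) = norm (A *v e + \<rho>)" by (simp add: \<rho>_def)
  also have "\<dots> \<le> norm (A *v e) + norm \<rho>" by (rule norm_triangle_ineq)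
  also have "\<dots> \<le> L * norm e + Mlip * (norm e)\<^sup>2"
    using nA[of e] n\<rho> by (simp add: power2_eq_square mult_ac)
  finally show "norm (g y) \<le> L * norm (y - xs) + Mlip * (norm (y - xs))\<^sup>2" by (simp add: e_def)
qed

lemma indep_set_sym:
  assumes "prob_space M" "prob_space.indep_set M A B" shows "prob_space.indep_set M B A"
proof -
  interpret prob_space M by fact
  from assms(2)[unfolded indep_sets2_eq] have h: "A \<subseteq> events" "B \<subseteq> events"
    "\<And>a b. a \<in> A \<Longrightarrow> b \<in> B \<Longrightarrow> prob (a \<inter> b) = prob a * prob b" by auto
  show ?thesis unfolding indep_sets2_eq
  proof (intro conjI ballI)
    show "B \<subseteq> events" "A \<subseteq> events" using h by auto
    fix b a assume "b \<in> B" "a \<in> A"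
    have "prob (a \<inter> b) = prob a * prob b" by (rule h(3)) fact+
    then show "prob (b \<inter> a) = prob b * prob a" by (metis Int_commute mult.commute)
  qed
qed

locale noise_setup =
  fixes M :: "'a measure" and P :: "'b measure" and S :: "'c measure" and Z :: "'a \<Rightarrow> 'c"
    and W :: "'a \<Rightarrow> 'b" and G :: "real^'n \<Rightarrow> 'b \<Rightarrow> real^'n" and g :: "real^'n \<Rightarrow> real^'n"
    and \<sigma> :: real
  assumes M: "prob_space M" and P: "prob_space P" and Zm: "Z \<in> measurable M S" and Wm: "W \<in> measurable M P"
    and ind: "prob_space.indep_set M (sets (vimage_algebra (space M) W P)) (sets (vimage_algebra (space M) Z S))"
    and dW: "distr M P W = P"
    and G_meas: "(\<lambda>(y, s). G y s) \<in> borel_measurable (borel \<Otimes>\<^sub>M P)"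
    and g_meas: "g \<in> borel_measurable borel"
    and G_int: "\<And>y. integrable P (G y)"
    and G_unbiased: "\<And>y. (\<integral>s. G y s \<partial>P) = g y"
    and G_var: "\<And>y. (\<integral>\<^sup>+ s. ennreal ((norm (G y s - g y))\<^sup>2) \<partial>P) \<le> ennreal (\<sigma>\<^sup>2)"
begin

interpretation Mp: prob_space M by (rule M)
interpretation Pp: prob_space P by (rule P)

definition "Q = distr M S Z"

interpretation Qp: prob_space Q unfolding Q_def by (rule Mp.prob_space_distr[OF Zm])
interpretation QP: pair_sigma_finite Q P
  by (intro pair_sigma_finite.intro Qp.sigma_finite_measure_axioms Pp.sigma_finite_measure_axioms)

lemma joint_sym: "Q \<Otimes>\<^sub>M P = distr M (S \<Otimes>\<^sub>M P) (\<lambda>a. (Z a, W a))"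
proof (rule pair_measure_eqI)
  show "sigma_finite_measure Q" "sigma_finite_measure P"
    by (rule Qp.sigma_finite_measure_axioms Pp.sigma_finite_measure_axioms)+
  show "sets (Q \<Otimes>\<^sub>M P) = sets (distr M (S \<Otimes>\<^sub>M P) (\<lambda>a. (Z a, W a)))"
    by (simp add: Q_def)
  fix A B assume A: "A \<in> sets Q" and B: "B \<in> sets P"
  have AS: "A \<in> sets S" using A by (simp add: Q_def)
  have ZWm: "(\<lambda>a. (Z a, W a)) \<in> measurable M (S \<Otimes>\<^sub>M P)"
    using Zm Wm by (rule measurable_Pair)
  have eq: "(\<lambda>a. (Z a, W a)) -` (A \<times> B) \<inter> space M = (W -` B \<inter> space M) \<inter> (Z -` A \<inter> space M)"
    by auto
  have i: "Mp.prob ((W -` B \<inter> space M) \<inter> (Z -` A \<inter> space M)) = Mp.prob (W -` B \<inter> space M) * Mp.prob (Z -` A \<inter> space M)"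
  proof -
    have h: "\<forall>a\<in>sets (vimage_algebra (space M) W P). \<forall>b\<in>sets (vimage_algebra (space M) Z S). Mp.prob (a \<inter> b) = Mp.prob a * Mp.prob b"
      using ind[unfolded Mp.indep_sets2_eq] by (elim conjE)
    show ?thesis by (rule h[rule_format, OF in_vimage_algebra[OF B] in_vimage_algebra[OF AS]])
  qed
  have "emeasure (distr M (S \<Otimes>\<^sub>M P) (\<lambda>a. (Z a, W a))) (A \<times> B)
       = emeasure M ((W -` B \<inter> space M) \<inter> (Z -` A \<inter> space M))"
    using AS B by (subst emeasure_distr[OF ZWm]) (auto simp: eq)
  also have "\<dots> = ennreal (Mp.prob (Z -` A \<inter> space M)) * ennreal (Mp.prob (W -` B \<inter> space M))"
    unfolding Mp.emeasure_eq_measure i by (simp add: ennreal_mult' mult.commute)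
  also have "\<dots> = emeasure Q A * emeasure P B"
  proof -
    have "emeasure Q A = emeasure M (Z -` A \<inter> space M)" using AS by (simp add: Q_def emeasure_distr[OF Zm])
    moreover have "emeasure P B = emeasure M (W -` B \<inter> space M)"
      using B emeasure_distr[OF Wm, of B] unfolding dW by simp
    ultimately show ?thesis by (simp add: Mp.emeasure_eq_measure)
  qed
  finally show "emeasure Q A * emeasure P B = emeasure (distr M (S \<Otimes>\<^sub>M P) (\<lambda>a. (Z a, W a))) (A \<times> B)" by (rule sym)
qed

lemmas joint = joint_sym[symmetric]

lemma Gm[measurable]: "(\<lambda>p. G (f p) (snd p)) \<in> borel_measurable (N \<Otimes>\<^sub>M P)"
  if [measurable]: "f \<in> borel_measurable (N \<Otimes>\<^sub>M P)" for f :: "_ \<Rightarrow> real^'n" and N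
proof -
  have "(\<lambda>p. (f p, snd p)) \<in> measurable (N \<Otimes>\<^sub>M P) (borel \<Otimes>\<^sub>M P)" by measurable
  from measurable_compose[OF this G_meas] show ?thesis by simp
qed

lemma Gy[measurable]: "G y \<in> borel_measurable P" by (rule borel_measurable_integrable[OF G_int])

lemma xi_var: "(\<integral>\<^sup>+ s. ennreal (norm (G y s - g y)) \<partial>P) \<le> 1 + ennreal (\<sigma>\<^sup>2)"
proof -
  have "(\<integral>\<^sup>+ s. ennreal (norm (G y s - g y)) \<partial>P) \<le> (\<integral>\<^sup>+ s. 1 + ennreal ((norm (G y s - g y))\<^sup>2) \<partial>P)"
  proof (rule nn_integral_mono)
    fix s
    have "norm (G y s - g y) \<le> 1 + (norm (G y s - g y))\<^sup>2"
    proof (cases "norm (G y s - g y) \<le> 1")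
      case True then show ?thesis by (simp add: add_increasing2)
    next
      case False
      then have "norm (G y s - g y) * 1 \<le> norm (G y s - g y) * norm (G y s - g y)"
        by (intro mult_left_mono) auto
      then show ?thesis by (simp add: power2_eq_square)
    qed
    then show "ennreal (norm (G y s - g y)) \<le> 1 + ennreal ((norm (G y s - g y))\<^sup>2)"
      by (metis ennreal_1 ennreal_leI ennreal_plus zero_le_one zero_le_power2)
  qed
  also have "\<dots> = 1 + (\<integral>\<^sup>+ s. ennreal ((norm (G y s - g y))\<^sup>2) \<partial>P)"
    using G_int[of y] by (subst nn_integral_add) (auto simp: Pp.emeasure_space_1)
  also have "\<dots> \<le> 1 + ennreal (\<sigma>\<^sup>2)" using G_var[of y] by (simp add: add_left_mono)
  finally show ?thesis .
qed

lemma QP_meas: "measurable (Q \<Otimes>\<^sub>M P) N = measurable (S \<Otimes>\<^sub>M P) N"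
  by (rule measurable_cong_sets) (auto simp: Q_def intro!: sets_pair_measure_cong)

lemma noise_nn:
  assumes Psim[measurable]: "\<Psi> \<in> borel_measurable S" and B[measurable]: "B \<in> sets S"
  shows "(\<integral>\<^sup>+a. indicator B (Z a) * ennreal ((norm (G (\<Psi> (Z a)) (W a) - g (\<Psi> (Z a))))\<^sup>2) \<partial>M)
          \<le> ennreal (\<sigma>\<^sup>2) * emeasure M (Z -` B \<inter> space M)"
proof -
  note g_meas[measurable]
  define f where "f p = indicator B (fst p) * ennreal ((norm (G (\<Psi> (fst p)) (snd p) - g (\<Psi> (fst p))))\<^sup>2)" for p
  have fm[measurable]: "f \<in> borel_measurable (S \<Otimes>\<^sub>M P)" unfolding f_def by measurable
  have ZWm: "(\<lambda>a. (Z a, W a)) \<in> measurable M (S \<Otimes>\<^sub>M P)"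
    using Zm Wm by (rule measurable_Pair)
  have "(\<integral>\<^sup>+a. indicator B (Z a) * ennreal ((norm (G (\<Psi> (Z a)) (W a) - g (\<Psi> (Z a))))\<^sup>2) \<partial>M)
      = (\<integral>\<^sup>+a. f (Z a, W a) \<partial>M)" by (simp add: f_def)
  also have "\<dots> = integral\<^sup>N (distr M (S \<Otimes>\<^sub>M P) (\<lambda>a. (Z a, W a))) f"
    by (rule nn_integral_distr[OF ZWm, symmetric]) (simp add: fm)
  also have "\<dots> = integral\<^sup>N (Q \<Otimes>\<^sub>M P) f" by (simp only: joint)
  also have "\<dots> = (\<integral>\<^sup>+z. \<integral>\<^sup>+s. f (z, s) \<partial>P \<partial>Q)"
    by (rule Pp.nn_integral_fst[symmetric]) (simp add: Q_def)
  also have "\<dots> \<le> (\<integral>\<^sup>+z. ennreal (\<sigma>\<^sup>2) * indicator B z \<partial>Q)"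
  proof (rule nn_integral_mono)
    fix z
    have "(\<integral>\<^sup>+s. f (z, s) \<partial>P) = indicator B z * (\<integral>\<^sup>+s. ennreal ((norm (G (\<Psi> z) s - g (\<Psi> z)))\<^sup>2) \<partial>P)"
      unfolding f_def by (subst nn_integral_cmult[symmetric]) measurable
    also have "\<dots> \<le> indicator B z * ennreal (\<sigma>\<^sup>2)" by (rule mult_left_mono[OF G_var]) simp
    finally show "(\<integral>\<^sup>+s. f (z, s) \<partial>P) \<le> ennreal (\<sigma>\<^sup>2) * indicator B z" by (simp add: mult.commute)
  qed
  also have "\<dots> = ennreal (\<sigma>\<^sup>2) * emeasure Q B"
    by (rule nn_integral_cmult_indicator) (simp add: Q_def)
  also have "emeasure Q B = emeasure M (Z -` B \<inter> space M)"
    unfolding Q_def by (rule emeasure_distr[OF Zm B])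
  finally show ?thesis .
qed

lemma noise_int:
  fixes \<Phi> :: "'c \<Rightarrow> real^'n"
  assumes Phim[measurable]: "\<Phi> \<in> borel_measurable S" and Psim[measurable]: "\<Psi> \<in> borel_measurable S"
    and bd: "\<And>a. a \<in> space M \<Longrightarrow> norm (\<Phi> (Z a)) \<le> Bd" and Bd0: "0 \<le> Bd"
  shows "integrable M (\<lambda>a. \<Phi> (Z a) \<bullet> (G (\<Psi> (Z a)) (W a) - g (\<Psi> (Z a))))"
    and "(\<integral>a. \<Phi> (Z a) \<bullet> (G (\<Psi> (Z a)) (W a) - g (\<Psi> (Z a))) \<partial>M) = 0"
proof -
  note g_meas[measurable]
  define \<Phi>c where "\<Phi>c z = (if norm (\<Phi> z) \<le> Bd then \<Phi> z else 0)" for z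
  define h where "h p = \<Phi>c (fst p) \<bullet> (G (\<Psi> (fst p)) (snd p) - g (\<Psi> (fst p)))" for p
  have Phic[measurable]: "\<Phi>c \<in> borel_measurable S" unfolding \<Phi>c_def by measurable
  have hm[measurable]: "h \<in> borel_measurable (S \<Otimes>\<^sub>M P)" unfolding h_def by measurable
  have hmQ: "h \<in> borel_measurable (Q \<Otimes>\<^sub>M P)" using hm by (simp add: Q_def)
  have ZWm: "(\<lambda>a. (Z a, W a)) \<in> measurable M (S \<Otimes>\<^sub>M P)"
    using Zm Wm by (rule measurable_Pair)
  have nPhic: "norm (\<Phi>c z) \<le> Bd" for z using Bd0 by (simp add: \<Phi>c_def)
  have eqM: "h (Z a, W a) = \<Phi> (Z a) \<bullet> (G (\<Psi> (Z a)) (W a) - g (\<Psi> (Z a)))" if "a \<in> space M" for a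
    using bd[OF that] by (simp add: h_def \<Phi>c_def)
  have hint: "integrable (Q \<Otimes>\<^sub>M P) h"
    unfolding integrable_iff_bounded
  proof
    show "h \<in> borel_measurable (Q \<Otimes>\<^sub>M P)" by (rule hmQ)
    have "(\<integral>\<^sup>+p. ennreal (norm (h p)) \<partial>(Q \<Otimes>\<^sub>M P))
        \<le> (\<integral>\<^sup>+p. ennreal Bd * ennreal (norm (G (\<Psi> (fst p)) (snd p) - g (\<Psi> (fst p)))) \<partial>(Q \<Otimes>\<^sub>M P))"
    proof (rule nn_integral_mono)
      fix p
      have "norm (h p) \<le> norm (\<Phi>c (fst p)) * norm (G (\<Psi> (fst p)) (snd p) - g (\<Psi> (fst p)))"
        unfolding h_def real_norm_def by (rule Cauchy_Schwarz_ineq2)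
      also have "\<dots> \<le> Bd * norm (G (\<Psi> (fst p)) (snd p) - g (\<Psi> (fst p)))"
        by (rule mult_right_mono[OF nPhic]) simp
      finally show "ennreal (norm (h p)) \<le> ennreal Bd * ennreal (norm (G (\<Psi> (fst p)) (snd p) - g (\<Psi> (fst p))))"
        using Bd0 by (simp add: ennreal_mult[symmetric] ennreal_leI)
    qed
    also have "\<dots> = (\<integral>\<^sup>+z. \<integral>\<^sup>+s. ennreal Bd * ennreal (norm (G (\<Psi> z) s - g (\<Psi> z))) \<partial>P \<partial>Q)"
    proof -
      have mm: "(\<lambda>p. ennreal Bd * ennreal (norm (G (\<Psi> (fst p)) (snd p) - g (\<Psi> (fst p))))) \<in> borel_measurable (Q \<Otimes>\<^sub>M P)"
        unfolding QP_meas by measurable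
      show ?thesis using Pp.nn_integral_fst[OF mm] by simp
    qed
    also have "\<dots> \<le> (\<integral>\<^sup>+z. ennreal Bd * (1 + ennreal (\<sigma>\<^sup>2)) \<partial>Q)"
    proof (rule nn_integral_mono)
      fix z
      have "(\<integral>\<^sup>+s. ennreal Bd * ennreal (norm (G (\<Psi> z) s - g (\<Psi> z))) \<partial>P)
          = ennreal Bd * (\<integral>\<^sup>+s. ennreal (norm (G (\<Psi> z) s - g (\<Psi> z))) \<partial>P)"
        by (rule nn_integral_cmult) measurable
      also have "\<dots> \<le> ennreal Bd * (1 + ennreal (\<sigma>\<^sup>2))" by (rule mult_left_mono[OF xi_var]) simp
      finally show "(\<integral>\<^sup>+s. ennreal Bd * ennreal (norm (G (\<Psi> z) s - g (\<Psi> z))) \<partial>P) \<le> ennreal Bd * (1 + ennreal (\<sigma>\<^sup>2))" .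
    qed
    also have "\<dots> = ennreal Bd * (1 + ennreal (\<sigma>\<^sup>2))" by (simp add: Qp.emeasure_space_1)
    also have "\<dots> < \<infinity>" by (simp add: ennreal_mult_less_top)
    finally show "(\<integral>\<^sup>+p. ennreal (norm (h p)) \<partial>(Q \<Otimes>\<^sub>M P)) < \<infinity>" .
  qed
  have hint2: "integrable (distr M (S \<Otimes>\<^sub>M P) (\<lambda>a. (Z a, W a))) h" using hint by (simp only: joint)
  have "integrable M (\<lambda>a. h (Z a, W a))"
    using hint2 integrable_distr_eq[OF ZWm hm] by simp
  then show "integrable M (\<lambda>a. \<Phi> (Z a) \<bullet> (G (\<Psi> (Z a)) (W a) - g (\<Psi> (Z a))))"
  proof -
    have "integrable M (\<lambda>a. h (Z a, W a)) = integrable M (\<lambda>a. \<Phi> (Z a) \<bullet> (G (\<Psi> (Z a)) (W a) - g (\<Psi> (Z a))))"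
      by (rule Bochner_Integration.integrable_cong) (auto simp: eqM)
    with \<open>integrable M (\<lambda>a. h (Z a, W a))\<close> show ?thesis by simp
  qed
  have inner0: "(\<integral>s. h (z, s) \<partial>P) = 0" for z
  proof -
    have int: "integrable P (\<lambda>s. G (\<Psi> z) s - g (\<Psi> z))"
      by (intro Bochner_Integration.integrable_diff G_int Pp.integrable_const)
    have "(\<integral>s. h (z, s) \<partial>P) = \<Phi>c z \<bullet> (\<integral>s. G (\<Psi> z) s - g (\<Psi> z) \<partial>P)"
      unfolding h_def using int by simp
    also have "(\<integral>s. G (\<Psi> z) s - g (\<Psi> z) \<partial>P) = 0"
      using G_int[of "\<Psi> z"] by (simp add: Bochner_Integration.integral_diff G_unbiased Pp.prob_space)
    finally show ?thesis by simp
  qed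
  have "(\<integral>a. \<Phi> (Z a) \<bullet> (G (\<Psi> (Z a)) (W a) - g (\<Psi> (Z a))) \<partial>M) = (\<integral>a. h (Z a, W a) \<partial>M)"
    by (rule Bochner_Integration.integral_cong) (auto simp: eqM)
  also have "\<dots> = integral\<^sup>L (distr M (S \<Otimes>\<^sub>M P) (\<lambda>a. (Z a, W a))) h"
    by (rule integral_distr[OF ZWm hm, symmetric])
  also have "\<dots> = integral\<^sup>L (Q \<Otimes>\<^sub>M P) h" by (simp only: joint)
  also have "\<dots> = (\<integral>z. \<integral>s. h (z, s) \<partial>P \<partial>Q)" by (rule QP.integral_fst'[OF hint, symmetric])
  also have "\<dots> = 0" by (simp add: inner0)
  finally show "(\<integral>a. \<Phi> (Z a) \<bullet> (G (\<Psi> (Z a)) (W a) - g (\<Psi> (Z a))) \<partial>M) = 0" .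
qed

end

locale sgd =
  fixes g :: "real^'n \<Rightarrow> real^'n"
    and H :: "real^'n \<Rightarrow> real^'n^'n"
    and k :: nat
    and xs :: "real^'n"
    and \<delta> L \<mu> Mlip \<theta> \<sigma> :: real
    and \<alpha> :: "nat \<Rightarrow> real"
    and M :: "'a measure"
    and P :: "'b measure"
    and G :: "real^'n \<Rightarrow> 'b \<Rightarrow> real^'n"
    and \<omega> :: "nat \<Rightarrow> 'a \<Rightarrow> 'b"
    and x :: "nat \<Rightarrow> 'a \<Rightarrow> real^'n"
    and V :: "nat \<Rightarrow> nat \<Rightarrow> 'a \<Rightarrow> real^'n"
  assumes hess: "\<And>y. (g has_derivative (\<lambda>h. H y *v h)) (at y)"
    and k_ge: "1 \<le> k" and k_le: "k + 1 \<le> CARD('n)"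
    and crit: "g xs = 0"
    and \<delta>_pos: "\<delta> > 0" and \<mu>_pos: "\<mu> > 0" and L_gt: "L > \<mu>" and M_pos: "Mlip > 0"
    and eig: "\<And>y. norm (y - xs) \<le> \<delta> \<Longrightarrow>
               \<exists>lam. sym_eigenvalues (H y) lam \<and>
                 (\<forall>i<k. - L < lam i \<and> lam i < - \<mu>) \<and>
                 (\<forall>i. k \<le> i \<longrightarrow> i < CARD('n) \<longrightarrow> \<mu> < lam i \<and> lam i < L)"
    and lip: "\<And>y z. norm (y - xs) \<le> \<delta> \<Longrightarrow> norm (z - xs) \<le> \<delta> \<Longrightarrow>
               mat_opnorm (H y - H z) \<le> Mlip * norm (y - z)"
    and \<theta>_pos: "\<theta> > 0"
    and C_pos: "(1 - sqrt \<theta>) * \<mu> - L * \<theta> - 5 * L * sqrt \<theta> > 0"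
    and \<alpha>_pos: "\<And>n. 0 < \<alpha> n"
    and \<alpha>_nsum: "\<not> summable \<alpha>"
    and \<alpha>_sq: "summable (\<lambda>n. (\<alpha> n)\<^sup>2)"
    and M_prob: "prob_space M"
    and P_prob: "prob_space P"
    and G_meas: "(\<lambda>(y, s). G y s) \<in> borel_measurable (borel \<Otimes>\<^sub>M P)"
    and G_int: "\<And>y. integrable P (G y)"
    and G_unbiased: "\<And>y. (\<integral>s. G y s \<partial>P) = g y"
    and G_var: "\<And>y. (\<integral>\<^sup>+ s. ennreal ((norm (G y s - g y))\<^sup>2) \<partial>P) \<le> ennreal (\<sigma>\<^sup>2)"
    and \<omega>_meas: "\<And>n. \<omega> n \<in> measurable M P"
    and \<omega>_distr: "\<And>n. distr M P (\<omega> n) = P"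
    and x_meas: "\<And>n. x n \<in> borel_measurable M"
    and V_meas: "\<And>n i. V n i \<in> borel_measurable M"
    and \<omega>_indep: "\<And>n. prob_space.indep_set M
                    (sets (vimage_algebra (space M) (\<omega> n) P))
                    (sets (vimage_algebra (space M)
                      (\<lambda>a. (restrict (\<lambda>j. x j a) {..n}, restrict (\<lambda>i. V n i a) {..<k}))
                      (Pi\<^sub>M {..n} (\<lambda>_. borel) \<Otimes>\<^sub>M Pi\<^sub>M {..<k} (\<lambda>_. borel))))"
    and V_orth: "\<And>n a. a \<in> space M \<Longrightarrow> orthonormal_fam k (\<lambda>i. V n i a)"
    and V_approx: "\<And>n a. a \<in> space M \<Longrightarrow>
                    x n a \<in> cball xs (min (((1 - sqrt \<theta>) * \<mu> - L * \<theta> - 5 * L * sqrt \<theta>) / Mlip) \<delta>) \<Longrightarrow>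
                    \<exists>v. bottom_eigvecs (H (x n a)) k v \<and>
                      (mat_opnorm ((\<Sum>i<k. outer (V n i a)) - (\<Sum>i<k. outer (v i))))\<^sup>2 \<le> \<theta>"
    and iter: "\<And>n a. a \<in> space M \<Longrightarrow>
                x (Suc n) a = x n a - \<alpha> n *\<^sub>R
                  ((mat 1 - 2 *\<^sub>R (\<Sum>i<k. outer (V n i a))) *v G (x n a) (\<omega> n a))"
begin

interpretation Mp: prob_space M by (rule M_prob)

definition "Cc = (1 - sqrt \<theta>) * \<mu> - L * \<theta> - 5 * L * sqrt \<theta>"
definition "r = min (Cc / Mlip) \<delta>"
definition "U = cball xs r"
definition "c0 = \<mu> - 2 * sqrt \<theta> * L - Cc"
definition "Bg = L * r + Mlip * r\<^sup>2"
definition "K = 2 * Bg\<^sup>2 + 2 * \<sigma>\<^sup>2"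
definition "A n = {a \<in> space M. \<forall>j\<in>{..n}. x j a \<in> U}"
definition "D n a = (norm (x n a - xs))\<^sup>2"
definition "Wt n a = indicator (A n) a * D n a"
definition "T n = (\<Sum>j. (\<alpha> j)\<^sup>2) - (\<Sum>j<n. (\<alpha> j)\<^sup>2)"
definition "Sp n a = Wt n a + K * T n"
definition "Xn n a = restrict (\<lambda>j. x j a) {..n}"
definition "F n = vimage_algebra (space M) (Xn n) (Pi\<^sub>M {..n} (\<lambda>_. borel))"
definition "Zn n a = (Xn n a, restrict (\<lambda>i. V n i a) {..<k})"
definition "SZ n = (Pi\<^sub>M {..n} (\<lambda>_. borel) \<Otimes>\<^sub>M Pi\<^sub>M {..<k} (\<lambda>_. borel) :: ((nat \<Rightarrow> real^'n) \<times> (nat \<Rightarrow> real^'n)) measure)"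

lemma Cc_pos: "0 < Cc" using C_pos by (simp add: Cc_def)
lemma r_pos: "0 < r" using Cc_pos M_pos \<delta>_pos by (simp add: r_def)
lemma c0_pos: "0 < c0"
proof -
  have "c0 = sqrt \<theta> * \<mu> + L * \<theta> + 3 * L * sqrt \<theta>" by (simp add: c0_def Cc_def algebra_simps)
  moreover have "0 < sqrt \<theta> * \<mu> + L * \<theta> + 3 * L * sqrt \<theta>"
    using \<theta>_pos \<mu>_pos L_gt by (intro add_pos_pos mult_pos_pos) auto
  ultimately show ?thesis by simp
qed
lemma K_nonneg: "0 \<le> K" by (simp add: K_def)

lemma Xn_meas[measurable]: "Xn n \<in> measurable M (Pi\<^sub>M {..n} (\<lambda>_. borel))"
  unfolding Xn_def by (rule measurable_restrict) (simp add: x_meas)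

lemma Xn_space: "Xn n \<in> space M \<rightarrow> space (Pi\<^sub>M {..n} (\<lambda>_. borel))"
  by (auto simp: Xn_def space_PiM)

lemma space_F[simp]: "space (F n) = space M" by (simp add: F_def)

lemma Xn_F: "Xn n \<in> measurable (F n) (Pi\<^sub>M {..n} (\<lambda>_. borel))"
  unfolding F_def by (rule measurable_vimage_algebra1[OF Xn_space])

lemma x_F: assumes "j \<le> n" shows "x j \<in> borel_measurable (F n)"
proof -
  have "(\<lambda>a. Xn n a j) \<in> borel_measurable (F n)"
    using measurable_compose[OF Xn_F measurable_component_singleton[of j "{..n}" "\<lambda>_. borel"]] assms by simp
  moreover have "Xn n a j = x j a" for a using assms by (simp add: Xn_def)
  ultimately show ?thesis by simp
qed

lemma sets_F: "sets (F n) = {Xn n -` B \<inter> space M | B. B \<in> sets (Pi\<^sub>M {..n} (\<lambda>_. borel))}"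
  unfolding F_def by (rule sets_vimage_algebra2[OF Xn_space])

lemma F_sub_M: "Y \<in> sets (F n) \<Longrightarrow> Y \<in> sets M"
  unfolding sets_F using Xn_meas by (auto intro: measurable_sets)

lemma F_mono: assumes "n \<le> N" "Y \<in> sets (F n)" shows "Y \<in> sets (F N)"
proof -
  obtain B where B: "B \<in> sets (Pi\<^sub>M {..n} (\<lambda>_. borel))" "Y = Xn n -` B \<inter> space M"
    using assms(2) unfolding sets_F by auto
  have "Xn n \<in> measurable (F N) (Pi\<^sub>M {..n} (\<lambda>_. borel))"
    unfolding Xn_def by (rule measurable_restrict) (use assms(1) x_F in auto)
  from measurable_sets[OF this B(1)] show ?thesis using B(2) by simp
qed

lemma U_closed: "U \<in> sets borel" by (simp add: U_def)

lemma A_F: assumes "j \<le> N" shows "A j \<in> sets (F N)"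
proof -
  have "A j = (\<Inter>i\<in>{..j}. x i -` U \<inter> space (F N)) \<inter> space (F N)"
    by (auto simp: A_def)
  also have "\<dots> \<in> sets (F N)"
  proof -
    have m: "\<And>i. i \<in> {..j} \<Longrightarrow> x i -` U \<inter> space (F N) \<in> sets (F N)"
      using measurable_sets[OF x_F U_closed] assms by auto
    have "(\<Inter>i\<in>{..j}. x i -` U \<inter> space (F N)) \<in> sets (F N)"
      by (rule sets.finite_INT) (use m in auto)
    then show ?thesis by auto
  qed
  finally show ?thesis .
qed

lemma A_M: "A n \<in> sets M" using A_F[of n n] F_sub_M by auto

lemma Wt_F: assumes "j \<le> N" shows "Wt j \<in> borel_measurable (F N)"
proof -
  have 1: "indicator (A j) \<in> borel_measurable (F N)" by (rule borel_measurable_indicator[OF A_F[OF assms]])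
  have c: "(\<lambda>y. (norm (y - xs))\<^sup>2) \<in> borel_measurable borel" by measurable
  have 2: "(\<lambda>a. (norm (x j a - xs))\<^sup>2) \<in> borel_measurable (F N)"
    using measurable_compose[OF x_F[OF assms] c] by simp
  show ?thesis unfolding Wt_def D_def by (rule borel_measurable_times[OF 1 2])
qed

lemma Sp_F: assumes "j \<le> N" shows "Sp j \<in> borel_measurable (F N)"
  unfolding Sp_def by (rule borel_measurable_add[OF Wt_F[OF assms] borel_measurable_const])

lemma F_subalg: "subalgebra M (F n)"
  unfolding subalgebra_def using F_sub_M by auto

lemma F_M_meas: "f \<in> borel_measurable (F n) \<Longrightarrow> f \<in> borel_measurable M"
  by (rule measurable_from_subalg[OF F_subalg])

lemma r_le: "r \<le> \<delta>" "Mlip * r \<le> Cc"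
  using M_pos by (auto simp: r_def min_def field_simps)

lemma U_eq: "U = cball xs (min (((1 - sqrt \<theta>) * \<mu> - L * \<theta> - 5 * L * sqrt \<theta>) / Mlip) \<delta>)"
  by (simp add: U_def r_def Cc_def)

lemma in_U: "y \<in> U \<Longrightarrow> norm (y - xs) \<le> r"
  by (simp add: U_def dist_norm norm_minus_commute)

lemma A_x: "a \<in> A n \<Longrightarrow> j \<le> n \<Longrightarrow> x j a \<in> U" by (auto simp: A_def)

lemma geo_at:
  assumes a: "a \<in> space M" and xU: "x n a \<in> U"
  shows "c0 * D n a \<le> Rf k (\<lambda>i. V n i a) (x n a - xs) \<bullet> g (x n a)"
    and "norm (g (x n a)) \<le> Bg"
proof -
  have ne: "norm (x n a - xs) \<le> r" by (rule in_U[OF xU])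
  have nd: "norm (x n a - xs) \<le> \<delta>" using ne r_le by linarith
  have nC: "Mlip * norm (x n a - xs) \<le> Cc"
    using mult_left_mono[OF ne, of Mlip] M_pos r_le by linarith
  obtain v where v: "bottom_eigvecs (H (x n a)) k v"
    "(mat_opnorm ((\<Sum>i<k. outer (V n i a)) - (\<Sum>i<k. outer (v i))))\<^sup>2 \<le> \<theta>"
    using V_approx[OF a, of n] xU U_eq by auto
  note G = geo[OF hess crit eig lip k_ge _ \<mu>_pos L_gt _ nd nC V_orth[OF a] v]
  show "c0 * D n a \<le> Rf k (\<lambda>i. V n i a) (x n a - xs) \<bullet> g (x n a)"
    using G(1) k_le M_pos by (simp add: c0_def D_def)
  have "norm (g (x n a)) \<le> L * norm (x n a - xs) + Mlip * (norm (x n a - xs))\<^sup>2"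
    using G(2) k_le M_pos by simp
  also have "\<dots> \<le> L * r + Mlip * r\<^sup>2"
    using ne L_gt \<mu>_pos M_pos
    by (intro add_mono mult_left_mono power_mono) auto
  finally show "norm (g (x n a)) \<le> Bg" by (simp add: Bg_def)
qed

lemma pw_step:
  assumes a: "a \<in> space M" and aA: "a \<in> A n"
  shows "D (Suc n) a \<le> (1 - 2 * \<alpha> n * c0) * D n a
          - 2 * \<alpha> n * (Rf k (\<lambda>i. V n i a) (x n a - xs) \<bullet> (G (x n a) (\<omega> n a) - g (x n a)))
          + (\<alpha> n)\<^sup>2 * (2 * Bg\<^sup>2 + 2 * (norm (G (x n a) (\<omega> n a) - g (x n a)))\<^sup>2)"
proof -
  have xU: "x n a \<in> U" using A_x[OF aA] by simp
  define e where "e = x n a - xs"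
  define R where "R = Rf k (\<lambda>i. V n i a)"
  define Gv where "Gv = G (x n a) (\<omega> n a)"
  define gv where "gv = g (x n a)"
  define \<xi> where "\<xi> = Gv - gv"
  have g1: "c0 * (norm e)\<^sup>2 \<le> R e \<bullet> gv" using geo_at(1)[OF a xU] by (simp add: D_def e_def R_def gv_def)
  have g2: "norm gv \<le> Bg" using geo_at(2)[OF a xU] by (simp add: gv_def)
  have it: "x (Suc n) a - xs = e - \<alpha> n *\<^sub>R R Gv"
    using iter[OF a, of n] by (simp add: Rf_mat e_def R_def Gv_def)
  have RN: "norm (R w) = norm w" for w unfolding R_def by (rule Rf_norm[OF V_orth[OF a]])
  have sym: "e \<bullet> R Gv = R e \<bullet> Gv" unfolding R_def by (rule Rf_sym)
  have E1: "D (Suc n) a = (norm (e - \<alpha> n *\<^sub>R R Gv))\<^sup>2" by (simp add: D_def it)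
  have E2: "(norm (e - \<alpha> n *\<^sub>R R Gv))\<^sup>2 = (norm e)\<^sup>2 - 2 * \<alpha> n * (e \<bullet> R Gv) + (\<alpha> n)\<^sup>2 * (norm (R Gv))\<^sup>2"
  proof -
    have c: "R Gv \<bullet> e = e \<bullet> R Gv" by (rule inner_commute)
    show ?thesis unfolding power2_norm_eq_inner inner_diff_left inner_diff_right inner_scaleR_left inner_scaleR_right c
      by (simp add: power2_eq_square algebra_simps)
  qed
  have E3: "e \<bullet> R Gv = R e \<bullet> gv + R e \<bullet> \<xi>" by (simp add: sym \<xi>_def inner_diff_right)
  have E4: "norm (R Gv) = norm (gv + \<xi>)" by (simp add: RN \<xi>_def)
  have E5: "(norm (gv + \<xi>))\<^sup>2 \<le> 2 * Bg\<^sup>2 + 2 * (norm \<xi>)\<^sup>2"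
  proof -
    have "norm (gv + \<xi>) \<le> norm gv + norm \<xi>" by (rule norm_triangle_ineq)
    then have 1: "(norm (gv + \<xi>))\<^sup>2 \<le> (norm gv + norm \<xi>)\<^sup>2" by (simp add: power_mono)
    have 2: "0 \<le> (norm gv - norm \<xi>)\<^sup>2" by simp
    have 3: "(norm gv)\<^sup>2 \<le> Bg\<^sup>2" using g2 by (simp add: power_mono)
    show ?thesis using 1 2 3 unfolding power2_sum power2_diff by linarith
  qed
  have E6: "(\<alpha> n)\<^sup>2 * (norm (gv + \<xi>))\<^sup>2 \<le> (\<alpha> n)\<^sup>2 * (2 * Bg\<^sup>2 + 2 * (norm \<xi>)\<^sup>2)"
    using E5 by (rule mult_left_mono) simp
  have E7: "2 * \<alpha> n * (c0 * (norm e)\<^sup>2) \<le> 2 * \<alpha> n * (R e \<bullet> gv)"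
    using g1 \<alpha>_pos[of n] by simp
  have E8: "(1 - 2 * \<alpha> n * c0) * (norm e)\<^sup>2 = (norm e)\<^sup>2 - 2 * \<alpha> n * (c0 * (norm e)\<^sup>2)"
    by (simp add: algebra_simps)
  have E9: "2 * \<alpha> n * (R e \<bullet> gv + R e \<bullet> \<xi>) = 2 * \<alpha> n * (R e \<bullet> gv) + 2 * \<alpha> n * (R e \<bullet> \<xi>)"
    by (simp add: algebra_simps)
  have "D (Suc n) a \<le> (1 - 2 * \<alpha> n * c0) * (norm e)\<^sup>2 - 2 * \<alpha> n * (R e \<bullet> \<xi>) + (\<alpha> n)\<^sup>2 * (2 * Bg\<^sup>2 + 2 * (norm \<xi>)\<^sup>2)"
    unfolding E1 E2 E3 E4 E8 using E6 E7 E9 by linarith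
  then show ?thesis by (simp add: D_def e_def R_def Gv_def gv_def \<xi>_def)
qed

end

lemma Pj_restrict: "Pj k (restrict V {..<k}) = Pj k V"
  by (rule ext) (simp add: Pj_def)

lemma Rf_restrict: "Rf k (restrict V {..<k}) = Rf k V"
  by (rule ext) (simp add: Rf_def Pj_restrict)

context sgd begin

interpretation Mp: prob_space M by (rule M_prob)

lemma g_meas: "g \<in> borel_measurable borel"
proof (rule borel_measurable_continuous_onI)
  show "continuous_on UNIV g"
    by (rule continuous_at_imp_continuous_on) (auto intro: has_derivative_continuous[OF hess])
qed

lemma Zn_meas: "Zn n \<in> measurable M (SZ n)"
  unfolding Zn_def SZ_def
  by (intro measurable_Pair Xn_meas measurable_restrict) (simp add: V_meas)

lemma Zn_eq: "Zn n = (\<lambda>a. (restrict (\<lambda>j. x j a) {..n}, restrict (\<lambda>i. V n i a) {..<k}))"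
  by (rule ext) (simp add: Zn_def Xn_def)

lemma noise: "noise_setup M P (SZ n) (Zn n) (\<omega> n) G g \<sigma>"
proof (rule noise_setup.intro)
  show "prob_space M" "prob_space P" by (rule M_prob P_prob)+
  show "Zn n \<in> measurable M (SZ n)" by (rule Zn_meas)
  show "\<omega> n \<in> measurable M P" by (rule \<omega>_meas)
  show "prob_space.indep_set M (sets (vimage_algebra (space M) (\<omega> n) P)) (sets (vimage_algebra (space M) (Zn n) (SZ n)))"
    using \<omega>_indep[of n] by (simp only: Zn_eq SZ_def)
  show "distr M P (\<omega> n) = P" by (rule \<omega>_distr)
  show "(\<lambda>(y, s). G y s) \<in> borel_measurable (borel \<Otimes>\<^sub>M P)" by (rule G_meas)
  show "g \<in> borel_measurable borel" by (rule g_meas)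
  show "integrable P (G y)" "(\<integral>s. G y s \<partial>P) = g y"
    "(\<integral>\<^sup>+ s. ennreal ((norm (G y s - g y))\<^sup>2) \<partial>P) \<le> ennreal (\<sigma>\<^sup>2)" for y
    by (rule G_int G_unbiased G_var)+
qed

definition "\<xi> n a = G (x n a) (\<omega> n a) - g (x n a)"
definition "Rve n a = Rf k (\<lambda>i. V n i a) (x n a - xs)"

lemma xi_meas: "\<xi> n \<in> borel_measurable M"
proof -
  have "(\<lambda>a. (x n a, \<omega> n a)) \<in> measurable M (borel \<Otimes>\<^sub>M P)"
    by (intro measurable_Pair x_meas \<omega>_meas)
  from measurable_compose[OF this G_meas] have "(\<lambda>a. G (x n a) (\<omega> n a)) \<in> borel_measurable M" by simp
  moreover have "(\<lambda>a. g (x n a)) \<in> borel_measurable M"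
    using measurable_compose[OF x_meas g_meas] by simp
  ultimately show ?thesis unfolding \<xi>_def by (rule borel_measurable_diff)
qed

lemma A_mono: "m \<le> n \<Longrightarrow> A n \<subseteq> A m" by (auto simp: A_def)

lemma Wt_bound: "0 \<le> Wt n a" "Wt n a \<le> r\<^sup>2"
proof -
  show "0 \<le> Wt n a" by (simp add: Wt_def D_def)
  show "Wt n a \<le> r\<^sup>2"
  proof (cases "a \<in> A n")
    case True
    then have "norm (x n a - xs) \<le> r" using A_x[OF True, of n] in_U by simp
    then show ?thesis using True by (simp add: Wt_def D_def power_mono)
  qed (simp add: Wt_def)
qed

lemma Wt_int: "Y \<in> sets M \<Longrightarrow> integrable M (\<lambda>a. indicator Y a * Wt n a)"
  apply (rule Mp.integrable_const_bound[where B = "r\<^sup>2"])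
  using Wt_bound[of n] apply (auto simp: indicator_def abs_le_iff intro: order_trans)[1]
  by (rule borel_measurable_times[OF borel_measurable_indicator F_M_meas[OF Wt_F[of n n]]]) auto

lemma step:
  assumes Y: "Y \<in> sets (F n)"
  shows "(\<integral>a. indicator Y a * Wt (Suc n) a \<partial>M)
          \<le> (1 - 2 * \<alpha> n * c0) * (\<integral>a. indicator Y a * Wt n a \<partial>M) + (\<alpha> n)\<^sup>2 * K * Mp.prob Y"
proof -
  interpret N: noise_setup M P "SZ n" "Zn n" "\<omega> n" G g \<sigma> by (rule noise)
  define Y' where "Y' = Y \<inter> A n"
  have Y'F: "Y' \<in> sets (F n)" unfolding Y'_def by (rule sets.Int[OF Y A_F[OF order_refl]])
  have Y'M: "Y' \<in> sets M" by (rule F_sub_M[OF Y'F])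
  have YM: "Y \<in> sets M" by (rule F_sub_M[OF Y])
  obtain B0 where B0: "B0 \<in> sets (Pi\<^sub>M {..n} (\<lambda>_. borel))" "Y' = Xn n -` B0 \<inter> space M"
    using Y'F unfolding sets_F by auto
  define B where "B = B0 \<times> space (Pi\<^sub>M {..<k} (\<lambda>_. borel :: (real^'n) measure))"
  have BS[measurable]: "B \<in> sets (SZ n)" unfolding B_def SZ_def using B0(1) by (intro pair_measureI) auto
  have hB: "indicator B (Zn n a) = (indicator Y' a :: real)" if "a \<in> space M" for a
    using that B0(2) by (auto simp: B_def Zn_def space_PiM indicator_def)
  have hBm: "Zn n a \<in> B \<longleftrightarrow> a \<in> Y'" if "a \<in> space M" for a
    using hB[OF that] by (auto simp: indicator_def split: if_splits)
  have Zpre: "Zn n -` B \<inter> space M = Y'"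
    using B0(2) by (auto simp: B_def Zn_def space_PiM)
  define \<Phi> where "\<Phi> z = indicator B z *\<^sub>R Rf k (snd z) (fst z n - xs)" for z :: "(nat \<Rightarrow> real^'n) \<times> (nat \<Rightarrow> real^'n)"
  define \<Psi> where "\<Psi> z = fst z n" for z :: "(nat \<Rightarrow> real^'n) \<times> (nat \<Rightarrow> real^'n)"
  have Psim: "\<Psi> \<in> borel_measurable (SZ n)" unfolding \<Psi>_def SZ_def by measurable
  have Phim: "\<Phi> \<in> borel_measurable (SZ n)"
  proof -
    have c1: "(\<lambda>z. fst z n - xs) \<in> borel_measurable (SZ n)" unfolding SZ_def by measurable
    have c2: "(\<lambda>z. snd z i) \<in> borel_measurable (SZ n)" if "i \<in> {..<k}" for i
      unfolding SZ_def
      by (rule measurable_compose[OF measurable_snd measurable_component_singleton[OF that]])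
    have c3: "(\<lambda>z. \<Sum>i\<in>{..<k}. (snd z i \<bullet> (fst z n - xs)) *\<^sub>R snd z i) \<in> borel_measurable (SZ n)"
      by (rule borel_measurable_sum) (intro borel_measurable_scaleR borel_measurable_inner c1 c2; assumption)
    have c4: "(\<lambda>z. Rf k (snd z) (fst z n - xs)) \<in> borel_measurable (SZ n)"
      unfolding Rf_def Pj_def by (intro borel_measurable_diff c1 borel_measurable_scaleR borel_measurable_const c3)
    show ?thesis unfolding \<Phi>_def
      by (intro borel_measurable_scaleR c4 borel_measurable_indicator BS)
  qed
  have PsiZ: "\<Psi> (Zn n a) = x n a" for a by (simp add: \<Psi>_def Zn_def Xn_def)
  have PhiZ: "\<Phi> (Zn n a) = indicator Y' a *\<^sub>R Rve n a" if "a \<in> space M" for a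
    using hB[OF that] by (simp add: \<Phi>_def Rve_def Zn_def Xn_def Rf_restrict)
  have nRve: "norm (Rve n a) = norm (x n a - xs)" if "a \<in> space M" for a
    unfolding Rve_def by (rule Rf_norm[OF V_orth[OF that]])
  have Phibd: "norm (\<Phi> (Zn n a)) \<le> r" if "a \<in> space M" for a
  proof (cases "a \<in> Y'")
    case True
    then have "a \<in> A n" by (simp add: Y'_def)
    then have "norm (x n a - xs) \<le> r" using A_x in_U by blast
    then show ?thesis using True that by (simp add: PhiZ nRve)
  next
    case False then show ?thesis using that r_pos by (simp add: PhiZ)
  qed
  have I2: "integrable M (\<lambda>a. indicator Y' a * (Rve n a \<bullet> \<xi> n a))"
   and I2v: "(\<integral>a. indicator Y' a * (Rve n a \<bullet> \<xi> n a) \<partial>M) = 0"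
  proof -
    have e: "\<Phi> (Zn n a) \<bullet> (G (\<Psi> (Zn n a)) (\<omega> n a) - g (\<Psi> (Zn n a))) = indicator Y' a * (Rve n a \<bullet> \<xi> n a)"
      if "a \<in> space M" for a using that by (simp add: PhiZ PsiZ \<xi>_def)
    have ni1: "integrable M (\<lambda>a. \<Phi> (Zn n a) \<bullet> (G (\<Psi> (Zn n a)) (\<omega> n a) - g (\<Psi> (Zn n a))))"
      by (rule N.noise_int(1)[OF Phim Psim Phibd less_imp_le[OF r_pos]])
    have ni2: "(\<integral>a. \<Phi> (Zn n a) \<bullet> (G (\<Psi> (Zn n a)) (\<omega> n a) - g (\<Psi> (Zn n a))) \<partial>M) = 0"
      by (rule N.noise_int(2)[OF Phim Psim Phibd less_imp_le[OF r_pos]])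
    have c1: "integrable M (\<lambda>a. \<Phi> (Zn n a) \<bullet> (G (\<Psi> (Zn n a)) (\<omega> n a) - g (\<Psi> (Zn n a))))
        = integrable M (\<lambda>a. indicator Y' a * (Rve n a \<bullet> \<xi> n a))"
      by (rule Bochner_Integration.integrable_cong) (simp_all add: e)
    have c2: "(\<integral>a. \<Phi> (Zn n a) \<bullet> (G (\<Psi> (Zn n a)) (\<omega> n a) - g (\<Psi> (Zn n a))) \<partial>M)
        = (\<integral>a. indicator Y' a * (Rve n a \<bullet> \<xi> n a) \<partial>M)"
      by (rule Bochner_Integration.integral_cong) (simp_all add: e)
    show "integrable M (\<lambda>a. indicator Y' a * (Rve n a \<bullet> \<xi> n a))" using ni1 c1 by simp
    show "(\<integral>a. indicator Y' a * (Rve n a \<bullet> \<xi> n a) \<partial>M) = 0" using ni2 c2 by simp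
  qed
  have I4m: "(\<lambda>a. indicator Y' a * (norm (\<xi> n a))\<^sup>2) \<in> borel_measurable M"
    using Y'M xi_meas[of n] by measurable
  have nn4: "(\<integral>\<^sup>+a. ennreal (indicator Y' a * (norm (\<xi> n a))\<^sup>2) \<partial>M) \<le> ennreal (\<sigma>\<^sup>2) * emeasure M Y'"
  proof -
    have "(\<integral>\<^sup>+a. ennreal (indicator Y' a * (norm (\<xi> n a))\<^sup>2) \<partial>M)
        = (\<integral>\<^sup>+a. indicator B (Zn n a) * ennreal ((norm (G (\<Psi> (Zn n a)) (\<omega> n a) - g (\<Psi> (Zn n a))))\<^sup>2) \<partial>M)"
      by (rule nn_integral_cong) (auto simp: hBm PsiZ \<xi>_def indicator_def)
    also have "\<dots> \<le> ennreal (\<sigma>\<^sup>2) * emeasure M (Zn n -` B \<inter> space M)"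
      by (rule N.noise_nn[OF Psim BS])
    finally show ?thesis by (simp add: Zpre)
  qed
  have I4: "integrable M (\<lambda>a. indicator Y' a * (norm (\<xi> n a))\<^sup>2)"
    unfolding integrable_iff_bounded
  proof
    show "(\<lambda>a. indicator Y' a * (norm (\<xi> n a))\<^sup>2) \<in> borel_measurable M" by (rule I4m)
    have "(\<integral>\<^sup>+a. ennreal (norm (indicator Y' a * (norm (\<xi> n a))\<^sup>2)) \<partial>M)
        = (\<integral>\<^sup>+a. ennreal (indicator Y' a * (norm (\<xi> n a))\<^sup>2) \<partial>M)"
      by (rule nn_integral_cong) (simp add: indicator_def)
    also have "\<dots> \<le> ennreal (\<sigma>\<^sup>2) * emeasure M Y'" by (rule nn4)
    also have "\<dots> < \<infinity>" by (simp add: Mp.emeasure_eq_measure ennreal_mult_less_top)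
    finally show "(\<integral>\<^sup>+a. ennreal (norm (indicator Y' a * (norm (\<xi> n a))\<^sup>2)) \<partial>M) < \<infinity>" .
  qed
  have I4v: "(\<integral>a. indicator Y' a * (norm (\<xi> n a))\<^sup>2 \<partial>M) \<le> \<sigma>\<^sup>2 * Mp.prob Y'"
  proof -
    have "ennreal (\<integral>a. indicator Y' a * (norm (\<xi> n a))\<^sup>2 \<partial>M) = (\<integral>\<^sup>+a. ennreal (indicator Y' a * (norm (\<xi> n a))\<^sup>2) \<partial>M)"
      by (rule nn_integral_eq_integral[OF I4, symmetric]) simp
    also have "\<dots> \<le> ennreal (\<sigma>\<^sup>2 * Mp.prob Y')"
      using nn4 by (simp add: Mp.emeasure_eq_measure ennreal_mult)
    finally show ?thesis by (simp add: ennreal_le_iff)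
  qed
  have I1: "integrable M (\<lambda>a. indicator Y' a * D n a)"
  proof -
    have "indicator Y' a * D n a = indicator Y a * Wt n a" for a
      by (simp add: Y'_def Wt_def indicator_inter_arith)
    then show ?thesis using Wt_int[OF YM, of n] by simp
  qed
  have I3: "integrable M (indicator Y' :: 'a \<Rightarrow> real)" using Y'M by (simp add: Mp.emeasure_eq_measure)
  define f1 where "f1 a = (1 - 2 * \<alpha> n * c0) * (indicator Y' a * D n a) - 2 * \<alpha> n * (indicator Y' a * (Rve n a \<bullet> \<xi> n a))
      + (\<alpha> n)\<^sup>2 * (2 * Bg\<^sup>2 * indicator Y' a + 2 * (indicator Y' a * (norm (\<xi> n a))\<^sup>2))" for a
  have If1: "integrable M f1" unfolding f1_def using I1 I2 I3 I4 by auto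
  have vf1: "(\<integral>a. f1 a \<partial>M) = (1 - 2 * \<alpha> n * c0) * (\<integral>a. indicator Y' a * D n a \<partial>M) - 2 * \<alpha> n * 0
      + (\<alpha> n)\<^sup>2 * (2 * Bg\<^sup>2 * Mp.prob Y' + 2 * (\<integral>a. indicator Y' a * (norm (\<xi> n a))\<^sup>2 \<partial>M))"
    unfolding f1_def using I1 I2 I3 I4 Y'M by (simp add: I2v)
  have pw: "indicator Y a * Wt (Suc n) a \<le> f1 a" if a: "a \<in> space M" for a
  proof (cases "a \<in> Y'")
    case True
    then have aA: "a \<in> A n" by (simp add: Y'_def)
    have "indicator Y a * Wt (Suc n) a \<le> D (Suc n) a"
      by (simp add: Wt_def indicator_def D_def)
    also have "\<dots> \<le> f1 a" using pw_step[OF a aA] True by (simp add: f1_def Rve_def \<xi>_def)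
    finally show ?thesis .
  next
    case False
    have h1: "indicator Y a * Wt (Suc n) a = 0"
      using A_mono[of n "Suc n"] False by (auto simp: Y'_def Wt_def indicator_def)
    have h2: "f1 a = 0" using False by (simp add: f1_def)
    show ?thesis unfolding h1 h2 by simp
  qed
  have "(\<integral>a. indicator Y a * Wt (Suc n) a \<partial>M) \<le> (\<integral>a. f1 a \<partial>M)"
    by (rule integral_mono[OF Wt_int[OF YM] If1 pw])
  also have "\<dots> \<le> (1 - 2 * \<alpha> n * c0) * (\<integral>a. indicator Y a * Wt n a \<partial>M) + (\<alpha> n)\<^sup>2 * K * Mp.prob Y"
  proof -
    have e1: "(\<integral>a. indicator Y' a * D n a \<partial>M) = (\<integral>a. indicator Y a * Wt n a \<partial>M)"
      by (rule Bochner_Integration.integral_cong) (simp_all add: Y'_def Wt_def indicator_inter_arith)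
    have pY: "Mp.prob Y' \<le> Mp.prob Y" unfolding Y'_def by (rule Mp.finite_measure_mono) (use YM in auto)
    have "2 * Bg\<^sup>2 * Mp.prob Y' + 2 * (\<integral>a. indicator Y' a * (norm (\<xi> n a))\<^sup>2 \<partial>M) \<le> K * Mp.prob Y'"
      using I4v by (simp add: K_def algebra_simps)
    also have "\<dots> \<le> K * Mp.prob Y" by (rule mult_left_mono[OF pY K_nonneg])
    finally have "(\<alpha> n)\<^sup>2 * (2 * Bg\<^sup>2 * Mp.prob Y' + 2 * (\<integral>a. indicator Y' a * (norm (\<xi> n a))\<^sup>2 \<partial>M)) \<le> (\<alpha> n)\<^sup>2 * (K * Mp.prob Y)"
      by (rule mult_left_mono) simp
    then show ?thesis unfolding vf1 e1 by simp
  qed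
  finally show ?thesis .
qed

end

context sgd begin

interpretation Mp: prob_space M by (rule M_prob)

lemma T_nonneg: "0 \<le> T n"
  unfolding T_def using sum_le_suminf[OF \<alpha>_sq, of "{..<n}"] by simp

lemma T_Suc: "T n = (\<alpha> n)\<^sup>2 + T (Suc n)"
  by (simp add: T_def)

lemma T_lim: "T \<longlonglongrightarrow> 0"
proof -
  have "(\<lambda>n. \<Sum>j<n. (\<alpha> j)\<^sup>2) \<longlonglongrightarrow> (\<Sum>j. (\<alpha> j)\<^sup>2)" by (rule summable_LIMSEQ[OF \<alpha>_sq])
  then have "(\<lambda>n. (\<Sum>j. (\<alpha> j)\<^sup>2) - (\<Sum>j<n. (\<alpha> j)\<^sup>2)) \<longlonglongrightarrow> (\<Sum>j. (\<alpha> j)\<^sup>2) - (\<Sum>j. (\<alpha> j)\<^sup>2)"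
    by (intro tendsto_diff tendsto_const)
  then show ?thesis by (simp add: T_def[abs_def])
qed

lemma Sp_M[measurable]: "Sp j \<in> borel_measurable M"
  by (rule F_M_meas[OF Sp_F[of j j]]) simp

lemma Wt_M[measurable]: "Wt j \<in> borel_measurable M"
  by (rule F_M_meas[OF Wt_F[of j j]]) simp

lemma Sp_nonneg: "0 \<le> Sp n a"
  using Wt_bound(1)[of n a] T_nonneg[of n] K_nonneg by (simp add: Sp_def)

lemma Sp_int: "Y \<in> sets M \<Longrightarrow> integrable M (\<lambda>a. indicator Y a * Sp n a)"
  apply (rule Mp.integrable_const_bound[where B = "r\<^sup>2 + K * T n"])
  using Wt_bound[of n] Sp_nonneg[of n] K_nonneg T_nonneg[of n]
   apply (auto simp: indicator_def Sp_def)[1]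
  by (intro borel_measurable_times borel_measurable_indicator Sp_M)

lemma int_Sp: assumes "Y \<in> sets M"
  shows "(\<integral>a. indicator Y a * Sp n a \<partial>M) = (\<integral>a. indicator Y a * Wt n a \<partial>M) + K * T n * Mp.prob Y"
proof -
  have "(\<integral>a. indicator Y a * Sp n a \<partial>M) = (\<integral>a. indicator Y a * Wt n a + (K * T n) * indicator Y a \<partial>M)"
    by (simp add: Sp_def algebra_simps)
  also have "\<dots> = (\<integral>a. indicator Y a * Wt n a \<partial>M) + (\<integral>a. (K * T n) * indicator Y a \<partial>M)"
    using Wt_int[OF assms] assms by (intro Bochner_Integration.integral_add) (auto simp: Mp.emeasure_eq_measure)
  also have "(\<integral>a. (K * T n) * indicator Y a \<partial>M) = K * T n * Mp.prob Y"
    using assms by simp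
  finally show ?thesis .
qed

lemma int_Wt_nonneg: "0 \<le> (\<integral>a. indicator Y a * Wt n a \<partial>M)"
  by (rule integral_nonneg_AE) (simp add: Wt_bound(1))

lemma supermart:
  assumes Y: "Y \<in> sets (F n)"
  shows "(\<integral>a. indicator Y a * Sp (Suc n) a \<partial>M) + 2 * \<alpha> n * c0 * (\<integral>a. indicator Y a * Wt n a \<partial>M)
          \<le> (\<integral>a. indicator Y a * Sp n a \<partial>M)"
proof -
  have YM: "Y \<in> sets M" by (rule F_sub_M[OF Y])
  have "(\<integral>a. indicator Y a * Wt (Suc n) a \<partial>M)
          \<le> (1 - 2 * \<alpha> n * c0) * (\<integral>a. indicator Y a * Wt n a \<partial>M) + (\<alpha> n)\<^sup>2 * K * Mp.prob Y"
    by (rule step[OF Y])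
  then show ?thesis unfolding int_Sp[OF YM] T_Suc[of n] by (simp add: algebra_simps)
qed

lemma supermart':
  assumes Y: "Y \<in> sets (F n)"
  shows "(\<integral>a. indicator Y a * Sp (Suc n) a \<partial>M) \<le> (\<integral>a. indicator Y a * Sp n a \<partial>M)"
proof -
  have "0 \<le> 2 * \<alpha> n * c0 * (\<integral>a. indicator Y a * Wt n a \<partial>M)"
    using \<alpha>_pos[of n] c0_pos int_Wt_nonneg by simp
  then show ?thesis using supermart[OF Y] by linarith
qed

lemma split_int:
  assumes "Y \<in> sets M" "E \<in> sets M"
  shows "(\<integral>a. indicator Y a * Sp n a \<partial>M) = (\<integral>a. indicator (Y \<inter> E) a * Sp n a \<partial>M) + (\<integral>a. indicator (Y - E) a * Sp n a \<partial>M)"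
proof -
  have "(\<integral>a. indicator Y a * Sp n a \<partial>M) = (\<integral>a. indicator (Y \<inter> E) a * Sp n a + indicator (Y - E) a * Sp n a \<partial>M)"
    by (rule Bochner_Integration.integral_cong) (auto simp: indicator_def)
  also have "\<dots> = (\<integral>a. indicator (Y \<inter> E) a * Sp n a \<partial>M) + (\<integral>a. indicator (Y - E) a * Sp n a \<partial>M)"
    using assms by (intro Bochner_Integration.integral_add Sp_int) auto
  finally show ?thesis .
qed

lemma lam_prob:
  assumes "Y \<in> sets M" "0 < lv"
  shows "lv * Mp.prob {a \<in> Y. lv \<le> Sp n a} \<le> (\<integral>a. indicator {a \<in> Y. lv \<le> Sp n a} a * Sp n a \<partial>M)"
proof -
  have E: "{a \<in> Y. lv \<le> Sp n a} \<in> sets M"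
  proof -
    have "{a \<in> Y. lv \<le> Sp n a} = Y \<inter> {a \<in> space M. lv \<le> Sp n a}" using sets.sets_into_space[OF assms(1)] by auto
    also have "\<dots> \<in> sets M" using assms(1) by measurable
    finally show ?thesis .
  qed
  have I: "integrable M (indicator {a \<in> Y. lv \<le> Sp n a} :: 'a \<Rightarrow> real)"
    using E by (simp add: Mp.emeasure_eq_measure)
  have ii: "(\<integral>a. indicator {a \<in> Y. lv \<le> Sp n a} a \<partial>M) = Mp.prob {a \<in> Y. lv \<le> Sp n a}"
    unfolding integral_indicator using sets.sets_into_space[OF E] by (simp add: Int_absorb2)
  have "lv * Mp.prob {a \<in> Y. lv \<le> Sp n a} = (\<integral>a. lv * indicator {a \<in> Y. lv \<le> Sp n a} a \<partial>M)"
    unfolding integral_mult_right_zero ii ..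
  also have "\<dots> \<le> (\<integral>a. indicator {a \<in> Y. lv \<le> Sp n a} a * Sp n a \<partial>M)"
  proof (rule integral_mono)
    show "integrable M (\<lambda>a. lv * indicator {a \<in> Y. lv \<le> Sp n a} a)" using I by (rule integrable_mult_right)
    show "integrable M (\<lambda>a. indicator {a \<in> Y. lv \<le> Sp n a} a * Sp n a)" by (rule Sp_int[OF E])
    fix a show "lv * indicator {a \<in> Y. lv \<le> Sp n a} a \<le> indicator {a \<in> Y. lv \<le> Sp n a} a * Sp n a"
      by (auto simp: indicator_def)
  qed
  finally show ?thesis .
qed

definition "ExS m lv t = {a \<in> space M. \<exists>j\<in>{m..m+t}. lv \<le> Sp j a}"
definition "AllS m lv t = {a \<in> space M. \<forall>j\<in>{m..m+t}. Sp j a < lv}"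

lemma All_F: "AllS m lv t \<in> sets (F (m + t))"
proof -
  have m: "\<And>j. j \<in> {m..m+t} \<Longrightarrow> Sp j -` {..<lv} \<inter> space (F (m + t)) \<in> sets (F (m + t))"
    using measurable_sets[OF Sp_F] by auto
  have "(\<Inter>j\<in>{m..m+t}. Sp j -` {..<lv} \<inter> space (F (m + t))) \<in> sets (F (m + t))"
    by (rule sets.finite_INT) (use m in auto)
  moreover have "AllS m lv t = (\<Inter>j\<in>{m..m+t}. Sp j -` {..<lv} \<inter> space (F (m + t)))"
    by (auto simp: AllS_def)
  ultimately show ?thesis by simp
qed

lemma All_M: "AllS m lv t \<in> sets M" using F_sub_M[OF All_F] .

lemma Ex_M: "ExS m lv t \<in> sets M"
proof -
  have "ExS m lv t = space M - AllS m lv t" by (auto simp: ExS_def AllS_def not_less)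
  then show ?thesis using All_M by simp
qed

lemma maximal_inv:
  assumes lam: "0 < lv"
  shows "lv * Mp.prob (ExS m lv t) + (\<integral>a. indicator (AllS m lv t) a * Sp (m + t) a \<partial>M) \<le> (\<integral>a. Sp m a \<partial>M)"
proof (induction t)
  case 0
  have e1: "ExS m lv 0 = {a \<in> space M. lv \<le> Sp m a}" by (auto simp: ExS_def)
  have e2: "AllS m lv 0 = space M - {a \<in> space M. lv \<le> Sp m a}" by (auto simp: AllS_def)
  have "(\<integral>a. Sp m a \<partial>M) = (\<integral>a. indicator (space M) a * Sp m a \<partial>M)"
    by (rule Bochner_Integration.integral_cong) auto
  also have "\<dots> = (\<integral>a. indicator (space M \<inter> {a \<in> space M. lv \<le> Sp m a}) a * Sp m a \<partial>M)
      + (\<integral>a. indicator (space M - {a \<in> space M. lv \<le> Sp m a}) a * Sp m a \<partial>M)"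
    by (rule split_int) auto
  finally have s: "(\<integral>a. Sp m a \<partial>M) = (\<integral>a. indicator {a \<in> space M. lv \<le> Sp m a} a * Sp m a \<partial>M)
      + (\<integral>a. indicator (AllS m lv 0) a * Sp m a \<partial>M)"
    by (simp add: e2 Int_absorb1)
  have "lv * Mp.prob {a \<in> space M. lv \<le> Sp m a} \<le> (\<integral>a. indicator {a \<in> space M. lv \<le> Sp m a} a * Sp m a \<partial>M)"
    by (rule lam_prob[OF sets.top lam])
  then show ?case using s by (simp add: e1)
next
  case (Suc t)
  define Y where "Y = AllS m lv t"
  define E where "E = {a \<in> space M. lv \<le> Sp (Suc (m + t)) a}"
  have EM: "E \<in> sets M" unfolding E_def by measurable
  have YF: "Y \<in> sets (F (m + t))" unfolding Y_def by (rule All_F)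
  have YM: "Y \<in> sets M" unfolding Y_def by (rule All_M)
  have sm: "(\<integral>a. indicator Y a * Sp (Suc (m + t)) a \<partial>M) \<le> (\<integral>a. indicator Y a * Sp (m + t) a \<partial>M)"
    by (rule supermart'[OF YF])
  have sp: "(\<integral>a. indicator Y a * Sp (Suc (m + t)) a \<partial>M) = (\<integral>a. indicator (Y \<inter> E) a * Sp (Suc (m + t)) a \<partial>M)
      + (\<integral>a. indicator (Y - E) a * Sp (Suc (m + t)) a \<partial>M)"
    by (rule split_int[OF YM EM])
  have YE: "Y \<inter> E = {a \<in> Y. lv \<le> Sp (Suc (m + t)) a}" using sets.sets_into_space[OF YM] by (auto simp: E_def)
  have lp: "lv * Mp.prob (Y \<inter> E) \<le> (\<integral>a. indicator (Y \<inter> E) a * Sp (Suc (m + t)) a \<partial>M)"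
    unfolding YE by (rule lam_prob[OF YM lam])
  have All_eq: "AllS m lv (Suc t) = Y - E"
    by (auto simp: AllS_def Y_def E_def atLeastAtMostSuc_conv not_le)
  have Ex_eq: "ExS m lv (Suc t) = ExS m lv t \<union> (Y \<inter> E)"
    by (auto simp: ExS_def Y_def AllS_def E_def atLeastAtMostSuc_conv not_le)
  have disj: "ExS m lv t \<inter> (Y \<inter> E) = {}" by (auto simp: ExS_def Y_def AllS_def not_le)
  have pr: "Mp.prob (ExS m lv (Suc t)) = Mp.prob (ExS m lv t) + Mp.prob (Y \<inter> E)"
    unfolding Ex_eq by (rule Mp.finite_measure_Union[OF Ex_M _ disj]) (use YM EM in auto)
  show ?case
    using Suc.IH sm sp lp unfolding pr All_eq by (simp add: Y_def algebra_simps)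
qed

lemma maximal:
  assumes lam: "0 < lv"
  shows "lv * Mp.prob (ExS m lv t) \<le> (\<integral>a. Sp m a \<partial>M)"
proof -
  have "0 \<le> (\<integral>a. indicator (AllS m lv t) a * Sp (m + t) a \<partial>M)"
    by (rule integral_nonneg_AE) (simp add: Sp_nonneg)
  then show ?thesis using maximal_inv[OF lam, of m t] by linarith
qed

end

context sgd begin

interpretation Mp: prob_space M by (rule M_prob)

lemma int_space: "(\<integral>a. indicator (space M) a * f a \<partial>M) = (\<integral>a. f a \<partial>M)" for f :: "'a \<Rightarrow> real"
  by (rule Bochner_Integration.integral_cong) auto

lemma space_in_F: "space M \<in> sets (F n)"
  using sets.top[of "F n"] by simp

lemma ES_dec: "(\<integral>a. Sp (Suc n) a \<partial>M) \<le> (\<integral>a. Sp n a \<partial>M)"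
  using supermart'[OF space_in_F[of n]] by (simp add: int_space)

lemma sum_bound: "(\<integral>a. Sp N a \<partial>M) + 2 * c0 * (\<Sum>n<N. \<alpha> n * (\<integral>a. Wt n a \<partial>M)) \<le> (\<integral>a. Sp 0 a \<partial>M)"
proof (induction N)
  case 0 then show ?case by simp
next
  case (Suc N)
  have "(\<integral>a. Sp (Suc N) a \<partial>M) + 2 * \<alpha> N * c0 * (\<integral>a. Wt N a \<partial>M) \<le> (\<integral>a. Sp N a \<partial>M)"
    using supermart[OF space_in_F[of N]] by (simp add: int_space)
  then show ?case using Suc.IH by (simp add: algebra_simps)
qed

lemma ES_nonneg: "0 \<le> (\<integral>a. Sp n a \<partial>M)"
  by (rule integral_nonneg_AE) (simp add: Sp_nonneg)

lemma EW_nonneg: "0 \<le> (\<integral>a. Wt n a \<partial>M)"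
  by (rule integral_nonneg_AE) (simp add: Wt_bound)

lemma EW_summable: "summable (\<lambda>n. \<alpha> n * (\<integral>a. Wt n a \<partial>M))"
proof (rule summableI_nonneg_bounded)
  show "0 \<le> \<alpha> n * (\<integral>a. Wt n a \<partial>M)" for n using \<alpha>_pos[of n] EW_nonneg[of n] by simp
  show "(\<Sum>i<n. \<alpha> i * (\<integral>a. Wt i a \<partial>M)) \<le> (\<integral>a. Sp 0 a \<partial>M) / (2 * c0)" for n
  proof -
    have "2 * c0 * (\<Sum>i<n. \<alpha> i * (\<integral>a. Wt i a \<partial>M)) \<le> (\<integral>a. Sp 0 a \<partial>M)"
      using sum_bound[of n] ES_nonneg[of n] by linarith
    then show ?thesis using c0_pos by (simp add: field_simps)
  qed
qed

lemma EW_liminf: assumes "0 < \<epsilon>" shows "\<exists>m\<ge>N. (\<integral>a. Wt m a \<partial>M) < \<epsilon>"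
proof (rule ccontr)
  assume "\<not> (\<exists>m\<ge>N. (\<integral>a. Wt m a \<partial>M) < \<epsilon>)"
  then have ge: "\<And>m. m \<ge> N \<Longrightarrow> \<epsilon> \<le> (\<integral>a. Wt m a \<partial>M)" by auto
  have "summable (\<lambda>n. \<alpha> n * (\<integral>a. Wt n a \<partial>M) / \<epsilon>)"
    using EW_summable by (rule summable_divide)
  then have "summable \<alpha>"
  proof (rule summable_comparison_test'[where N = N])
    fix n assume "N \<le> n"
    then have "\<alpha> n * \<epsilon> \<le> \<alpha> n * (\<integral>a. Wt n a \<partial>M)" using ge \<alpha>_pos[of n] by simp
    then show "norm (\<alpha> n) \<le> \<alpha> n * (\<integral>a. Wt n a \<partial>M) / \<epsilon>"
      using \<alpha>_pos[of n] assms by (simp add: field_simps)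
  qed
  with \<alpha>_nsum show False by simp
qed

lemma ES_mono: "m \<le> n \<Longrightarrow> (\<integral>a. Sp n a \<partial>M) \<le> (\<integral>a. Sp m a \<partial>M)"
  by (induction n rule: dec_induct) (auto intro: order_trans[OF ES_dec])

lemma ES_lim: "(\<lambda>m. \<integral>a. Sp m a \<partial>M) \<longlonglongrightarrow> 0"
proof (rule LIMSEQ_I)
  fix \<epsilon> :: real assume e: "0 < \<epsilon>"
  have "\<forall>\<^sub>F n in sequentially. K * T n < \<epsilon> / 2"
  proof -
    have "(\<lambda>n. K * T n) \<longlonglongrightarrow> K * 0" by (intro tendsto_mult tendsto_const T_lim)
    then have lim0: "(\<lambda>n. K * T n) \<longlonglongrightarrow> 0" by simp
    have h: "\<forall>\<^sub>F n in sequentially. K * T n < \<epsilon> / 2" by (rule order_tendstoD(2)[OF lim0]) (use e in simp)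
    then show ?thesis .
  qed
  then obtain N1 where N1: "\<And>n. n \<ge> N1 \<Longrightarrow> K * T n < \<epsilon> / 2" by (auto simp: eventually_sequentially)
  obtain m where m: "m \<ge> N1" "(\<integral>a. Wt m a \<partial>M) < \<epsilon> / 2" using EW_liminf[of "\<epsilon> / 2" N1] e by auto
  have "(\<integral>a. Sp m a \<partial>M) = (\<integral>a. Wt m a \<partial>M) + K * T m"
    using int_Sp[OF sets.top, of m] by (simp add: int_space Mp.prob_space)
  then have Em: "(\<integral>a. Sp m a \<partial>M) < \<epsilon>" using m N1[OF m(1)] by simp
  show "\<exists>no. \<forall>n\<ge>no. norm ((\<integral>a. Sp n a \<partial>M) - 0) < \<epsilon>"
  proof (intro exI allI impI)
    fix n assume "m \<le> n"
    then show "norm ((\<integral>a. Sp n a \<partial>M) - 0) < \<epsilon>" using ES_mono[of m n] Em ES_nonneg[of n] by simp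
  qed
qed

definition "Bad lv = {a \<in> space M. \<forall>m. \<exists>j\<ge>m. lv \<le> Sp j a}"

lemma Bad_M: "Bad lv \<in> sets M" unfolding Bad_def by measurable

lemma Bad_prob: assumes lv: "0 < lv" shows "Mp.prob (Bad lv) = 0"
proof -
  have le: "Mp.prob (Bad lv) \<le> (\<integral>a. Sp m a \<partial>M) / lv" for m
  proof -
    have inc: "incseq (ExS m lv)" by (auto simp: incseq_def ExS_def)
    have rng: "range (ExS m lv) \<subseteq> sets M" using Ex_M by auto
    have lim: "(\<lambda>t. Mp.prob (ExS m lv t)) \<longlonglongrightarrow> Mp.prob (\<Union>t. ExS m lv t)"
      by (rule Mp.finite_Lim_measure_incseq[OF rng inc])
    have "Mp.prob (\<Union>t. ExS m lv t) \<le> (\<integral>a. Sp m a \<partial>M) / lv"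
    proof (rule LIMSEQ_le_const2[OF lim], intro exI allI impI)
      fix t
      show "Mp.prob (ExS m lv t) \<le> (\<integral>a. Sp m a \<partial>M) / lv"
        using maximal[OF lv, of m t] lv by (simp add: field_simps mult.commute)
    qed
    moreover have "Bad lv \<subseteq> (\<Union>t. ExS m lv t)"
    proof
      fix a assume "a \<in> Bad lv"
      then obtain j where "j \<ge> m" "lv \<le> Sp j a" "a \<in> space M" unfolding Bad_def by blast
      then have "a \<in> ExS m lv (j - m)" by (auto simp: ExS_def)
      then show "a \<in> (\<Union>t. ExS m lv t)" by blast
    qed
    then have "Mp.prob (Bad lv) \<le> Mp.prob (\<Union>t. ExS m lv t)"
      using rng by (intro Mp.finite_measure_mono) auto
    ultimately show ?thesis by linarith
  qed
  have "(\<lambda>m. (\<integral>a. Sp m a \<partial>M) / lv) \<longlonglongrightarrow> 0 / lv" by (intro tendsto_divide ES_lim tendsto_const) (use lv in auto)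
  then have "(\<lambda>m. (\<integral>a. Sp m a \<partial>M) / lv) \<longlonglongrightarrow> 0" by simp
  then have "Mp.prob (Bad lv) \<le> 0" by (rule LIMSEQ_le_const) (use le in auto)
  then show ?thesis using measure_nonneg[of M "Bad lv"] by linarith
qed

lemma main: "AE a in M. (\<forall>n. x n a \<in> U) \<longrightarrow> (\<lambda>n. x n a) \<longlonglongrightarrow> xs"
proof (rule AE_I')
  define N where "N = (\<Union>i. Bad (1 / real (Suc i)))"
  show "N \<in> null_sets M"
    unfolding N_def
  proof (rule null_sets_UN)
    fix i show "Bad (1 / real (Suc i)) \<in> null_sets M"
      using Bad_M Bad_prob[of "1 / real (Suc i)"] by (simp add: null_sets_def Mp.emeasure_eq_measure)
  qed
  show "{a \<in> space M. \<not> ((\<forall>n. x n a \<in> U) \<longrightarrow> (\<lambda>n. x n a) \<longlonglongrightarrow> xs)} \<subseteq> N"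
  proof (rule subsetI, rule ccontr)
    fix a assume a: "a \<in> {a \<in> space M. \<not> ((\<forall>n. x n a \<in> U) \<longrightarrow> (\<lambda>n. x n a) \<longlonglongrightarrow> xs)}" and aN: "a \<notin> N"
    then have aM: "a \<in> space M" and allU: "\<forall>n. x n a \<in> U" and nc: "\<not> (\<lambda>n. x n a) \<longlonglongrightarrow> xs" by auto
    have aA: "a \<in> A n" for n using aM allU by (simp add: A_def)
    have ev: "\<exists>m. \<forall>j\<ge>m. Sp j a < 1 / real (Suc i)" for i
    proof -
      have "a \<notin> Bad (1 / real (Suc i))" using aN by (simp add: N_def)
      then obtain m where "\<forall>j\<ge>m. \<not> (1 / real (Suc i) \<le> Sp j a)" using aM unfolding Bad_def by auto
      then show ?thesis by (auto simp: not_le)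
    qed
    have DS: "D j a \<le> Sp j a" for j
      using aA[of j] T_nonneg[of j] K_nonneg by (simp add: Sp_def Wt_def)
    have "(\<lambda>n. x n a) \<longlonglongrightarrow> xs"
    proof (rule LIMSEQ_I)
      fix \<epsilon> :: real assume e: "0 < \<epsilon>"
      obtain n0 where n0: "n0 > 0" "inverse (real n0) < \<epsilon>\<^sup>2"
        using ex_inverse_of_nat_less[of "\<epsilon>\<^sup>2"] e by auto
      define i where "i = n0 - 1"
      have "Suc i = n0" using n0(1) by (simp add: i_def)
      then have i: "inverse (real (Suc i)) < \<epsilon>\<^sup>2" using n0(2) by simp
      obtain m where m: "\<And>j. j \<ge> m \<Longrightarrow> Sp j a < 1 / real (Suc i)" using ev[of i] by blast
      show "\<exists>no. \<forall>n\<ge>no. norm (x n a - xs) < \<epsilon>"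
      proof (intro exI allI impI)
        fix j assume "m \<le> j"
        then have "(norm (x j a - xs))\<^sup>2 < \<epsilon>\<^sup>2"
          using DS[of j] m[of j] i by (simp add: D_def inverse_eq_divide)
        then show "norm (x j a - xs) < \<epsilon>" using e by (simp add: power_less_imp_less_base less_imp_le)
      qed
    qed
    with nc show False by simp
  qed
qed

end

theorem corollary4p18:
  fixes f :: "real^'n \<Rightarrow> real"
    and g :: "real^'n \<Rightarrow> real^'n"
    and H :: "real^'n \<Rightarrow> real^'n^'n"
    and H3 :: "real^'n \<Rightarrow> ((real^'n) \<Rightarrow>\<^sub>L (real^'n^'n))"
    and k :: nat
    and xs :: "real^'n"
    and \<delta> L \<mu> Mlip \<theta> \<sigma> :: real
    and \<alpha> :: "nat \<Rightarrow> real"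
    and M :: "'a measure"
    and P :: "'b measure"
    and G :: "real^'n \<Rightarrow> 'b \<Rightarrow> real^'n"
    and \<omega> :: "nat \<Rightarrow> 'a \<Rightarrow> 'b"
    and x :: "nat \<Rightarrow> 'a \<Rightarrow> real^'n"
    and V :: "nat \<Rightarrow> nat \<Rightarrow> 'a \<Rightarrow> real^'n"
  assumes grad: "\<And>y. (f has_derivative (\<lambda>h. g y \<bullet> h)) (at y)"
    and hess: "\<And>y. (g has_derivative (\<lambda>h. H y *v h)) (at y)"
    and third: "\<And>y. (H has_derivative blinfun_apply (H3 y)) (at y)"
    and third_cont: "continuous_on UNIV H3"
    and k_ge: "1 \<le> k" and k_le: "k + 1 \<le> CARD('n)"
    and crit: "g xs = 0"
    and \<delta>_pos: "\<delta> > 0" and \<mu>_pos: "\<mu> > 0" and L_gt: "L > \<mu>" and M_pos: "Mlip > 0"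
    and eig: "\<And>y. norm (y - xs) \<le> \<delta> \<Longrightarrow>
               \<exists>lam. sym_eigenvalues (H y) lam \<and>
                 (\<forall>i<k. - L < lam i \<and> lam i < - \<mu>) \<and>
                 (\<forall>i. k \<le> i \<longrightarrow> i < CARD('n) \<longrightarrow> \<mu> < lam i \<and> lam i < L)"
    and lip: "\<And>y z. norm (y - xs) \<le> \<delta> \<Longrightarrow> norm (z - xs) \<le> \<delta> \<Longrightarrow>
               mat_opnorm (H y - H z) \<le> Mlip * norm (y - z)"
    and \<theta>_pos: "\<theta> > 0"
    and C_pos: "(1 - sqrt \<theta>) * \<mu> - L * \<theta> - 5 * L * sqrt \<theta> > 0"
    and \<alpha>_pos: "\<And>n. 0 < \<alpha> n" and \<alpha>_le: "\<And>n. \<alpha> n < 1 / (2 * \<mu>)"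
    and \<alpha>_nsum: "\<not> summable \<alpha>"
    and \<alpha>_sq: "summable (\<lambda>n. (\<alpha> n)\<^sup>2)"
    and M_prob: "prob_space M"
    and P_prob: "prob_space P"
    and G_meas: "(\<lambda>(y, s). G y s) \<in> borel_measurable (borel \<Otimes>\<^sub>M P)"
    and G_int: "\<And>y. integrable P (G y)"
    and G_unbiased: "\<And>y. (\<integral>s. G y s \<partial>P) = g y"
    and G_var: "\<And>y. (\<integral>\<^sup>+ s. ennreal ((norm (G y s - g y))\<^sup>2) \<partial>P) \<le> ennreal (\<sigma>\<^sup>2)"
    and \<omega>_meas: "\<And>n. \<omega> n \<in> measurable M P"
    and \<omega>_distr: "\<And>n. distr M P (\<omega> n) = P"
    and x_meas: "\<And>n. x n \<in> borel_measurable M"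
    and V_meas: "\<And>n i. V n i \<in> borel_measurable M"
    and \<omega>_indep: "\<And>n. prob_space.indep_set M
                    (sets (vimage_algebra (space M) (\<omega> n) P))
                    (sets (vimage_algebra (space M)
                      (\<lambda>a. (restrict (\<lambda>j. x j a) {..n}, restrict (\<lambda>i. V n i a) {..<k}))
                      (Pi\<^sub>M {..n} (\<lambda>_. borel) \<Otimes>\<^sub>M Pi\<^sub>M {..<k} (\<lambda>_. borel))))"
    and V_orth: "\<And>n a. a \<in> space M \<Longrightarrow> orthonormal_fam k (\<lambda>i. V n i a)"
    and V_approx: "\<And>n a. a \<in> space M \<Longrightarrow>
                    x n a \<in> cball xs (min (((1 - sqrt \<theta>) * \<mu> - L * \<theta> - 5 * L * sqrt \<theta>) / Mlip) \<delta>) \<Longrightarrow>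
                    \<exists>v. bottom_eigvecs (H (x n a)) k v \<and>
                      (mat_opnorm ((\<Sum>i<k. outer (V n i a)) - (\<Sum>i<k. outer (v i))))\<^sup>2 \<le> \<theta>"
    and iter: "\<And>n a. a \<in> space M \<Longrightarrow>
                x (Suc n) a = x n a - \<alpha> n *\<^sub>R
                  ((mat 1 - 2 *\<^sub>R (\<Sum>i<k. outer (V n i a))) *v G (x n a) (\<omega> n a))"
    and E_pos: "measure M {a \<in> space M. \<forall>n. x n a \<in>
                  cball xs (min (((1 - sqrt \<theta>) * \<mu> - L * \<theta> - 5 * L * sqrt \<theta>) / Mlip) \<delta>)} > 0"
  shows "AE a in M. (\<forall>n. x n a \<in>
                  cball xs (min (((1 - sqrt \<theta>) * \<mu> - L * \<theta> - 5 * L * sqrt \<theta>) / Mlip) \<delta>))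
           \<longrightarrow> (\<lambda>n. x n a) \<longlonglongrightarrow> xs"
proof -
  have S: "sgd g H k xs \<delta> L \<mu> Mlip \<theta> \<sigma> \<alpha> M P G \<omega> x V"
    by (rule sgd.intro[OF hess k_ge k_le crit \<delta>_pos \<mu>_pos L_gt M_pos eig lip \<theta>_pos C_pos \<alpha>_pos \<alpha>_nsum \<alpha>_sq
          M_prob P_prob G_meas G_int G_unbiased G_var \<omega>_meas \<omega>_distr x_meas V_meas \<omega>_indep V_orth V_approx iter])
  show ?thesis using sgd.main[OF S] sgd.U_eq[OF S] by simp
qed

end
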